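(* For each integer $n\ge 0$ let $S_n(q)=\sum_{j=-n}^n (-1)^j q^{-j^2}$. Then for complex $a,c$ with $\max \{|a|, |c/q|, |ac/q|\}<1$, \begin{align*} \sum_{n=0}^\infty \frac{(q/c; q)_n}{(-a; q)_n} \biggl(-\frac{c}{q}\biggr)^n =\frac{(-q, a, c, -ac/q; q)_\infty}{(q, -a, -c/q, ac/q; q)_\infty}\Biggl(2+\sum_{n=1}^\infty (1+q^n)q^{n^2-2n}\frac{(q/a, q/c; q)_n (ac)^n}{(a, c; q)_n}\bigl(q^n S_n(q)-S_{n-1}(q)\bigr) \Biggr). \end{align*}
   Context: Throughout, $q$ is a complex number with $0<|q|<1$. For $x\in\mathbb{C}$, $(x;q)_\infty=\prod_{k=0}^\infty(1-xq^k)$ and, for an integer $n\ge 0$, $(x;q)_n=\prod_{k=0}^{n-1}(1-xq^k)$; also $(x_1,\dots,x_m;q)_n=(x_1;q)_n\cdots(x_m;q)_n$ for $n$ an integer or $\infty$. *)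

theory Defs
  imports "HOL-Analysis.Analysis"
begin

definition qpoch :: "complex \<Rightarrow> complex \<Rightarrow> nat \<Rightarrow> complex" where
  "qpoch x q n = (\<Prod>k<n. 1 - x * q ^ k)"

definition qpoch_inf :: "complex \<Rightarrow> complex \<Rightarrow> complex" where
  "qpoch_inf x q = (\<Prod>k. 1 - x * q ^ k)"

definition S_sum :: "complex \<Rightarrow> int \<Rightarrow> complex" where
  "S_sum q n = (\<Sum>j\<in>{-n..n}. (-1) powi j * q powi (-(j^2)))"

end

theory Submission
  imports Defs "HOL-Complex_Analysis.Complex_Analysis"
begin


lemma qpoch_0 [simp]: "qpoch x q 0 = 1"
  by (simp add: qpoch_def)

lemma qpoch_Suc: "qpoch x q (Suc n) = qpoch x q n * (1 - x * q ^ n)"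
  by (simp add: qpoch_def)

lemma qpoch_add: "qpoch x q (n + m) = qpoch x q n * qpoch (x * q ^ n) q m"
proof (induction m)
  case 0 then show ?case by simp
next
  case (Suc m)
  then show ?case by (simp add: qpoch_Suc power_add mult_ac)
qed

lemma qp_summable:
  fixes q x :: complex
  assumes "norm q < 1"
  shows "summable (\<lambda>k. norm (x * q ^ k))"
proof -
  have "summable (\<lambda>k. norm x * norm q ^ k)"
    using assms by (intro summable_mult summable_geometric) auto
  then show ?thesis by (simp add: norm_mult norm_power)
qed

lemma qp_convergent_prod:
  fixes q x :: complex
  assumes "norm q < 1"
  shows "convergent_prod (\<lambda>k. 1 - x * q ^ k)"
proof -
  have "summable (\<lambda>k. norm ((1 - x * q ^ k) - 1))"
    using qp_summable[OF assms, of x] by simp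
  then show ?thesis
    by (intro abs_convergent_prod_imp_convergent_prod summable_imp_abs_convergent_prod)
qed

lemma qpoch_LIMSEQ:
  fixes q x :: complex
  assumes "norm q < 1"
  shows "(\<lambda>n. qpoch x q n) \<longlonglongrightarrow> qpoch_inf x q"
proof -
  have "(\<lambda>n. \<Prod>k\<le>n. 1 - x * q ^ k) \<longlonglongrightarrow> qpoch_inf x q"
    unfolding qpoch_inf_def by (rule convergent_prod_LIMSEQ[OF qp_convergent_prod[OF assms]])
  then have "(\<lambda>n. qpoch x q (Suc n)) \<longlonglongrightarrow> qpoch_inf x q"
    by (simp add: qpoch_def lessThan_Suc_atMost)
  then show ?thesis by (rule LIMSEQ_imp_Suc)
qed

lemma qpoch_inf_split:
  fixes q x :: complex
  assumes "norm q < 1"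
  shows "qpoch_inf x q = qpoch x q n * qpoch_inf (x * q ^ n) q"
proof -
  have "(\<lambda>m. qpoch x q (m + n)) \<longlonglongrightarrow> qpoch_inf x q"
    using qpoch_LIMSEQ[OF assms, of x] by (rule LIMSEQ_ignore_initial_segment)
  then have "(\<lambda>m. qpoch x q (n + m)) \<longlonglongrightarrow> qpoch_inf x q" by (simp add: add.commute)
  moreover have "(\<lambda>m. qpoch x q (n + m)) \<longlonglongrightarrow> qpoch x q n * qpoch_inf (x * q ^ n) q"
    unfolding qpoch_add by (intro tendsto_mult tendsto_const qpoch_LIMSEQ assms)
  ultimately show ?thesis using LIMSEQ_unique by blast
qed

lemma qpoch_inf_nonzero:
  fixes q x :: complex
  assumes "norm q < 1" "\<And>k. x * q ^ k \<noteq> 1"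
  shows "qpoch_inf x q \<noteq> 0"
  unfolding qpoch_inf_def using assms
  by (intro prodinf_nonzero qp_convergent_prod) auto

lemma qpoch_nonzero:
  assumes "\<And>k. k < n \<Longrightarrow> x * q ^ k \<noteq> 1"
  shows "qpoch x q n \<noteq> 0"
  unfolding qpoch_def using assms by auto

lemma small_nonzero:
  fixes x q :: complex
  assumes "norm x < 1" "norm q < 1"
  shows "x * q ^ k \<noteq> 1"
proof
  assume "x * q ^ k = 1"
  then have "norm (x * q ^ k) = 1" by simp
  moreover have "norm (x * q ^ k) < 1"
  proof -
    have "norm (q ^ k) \<le> 1" using assms by (simp add: norm_power power_le_one)
    then have "norm x * norm (q ^ k) \<le> norm x" by (simp add: mult_left_le)
    then show ?thesis using assms by (simp add: norm_mult)
  qed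
  ultimately show False by simp
qed

lemma qpoch_norm_le:
  fixes x q :: complex
  assumes "norm q < 1"
  shows "norm (qpoch x q n) \<le> exp (norm x / (1 - norm q))"
proof -
  have "norm (qpoch x q n) = (\<Prod>k<n. norm (1 - x * q ^ k))"
    by (simp add: qpoch_def prod_norm)
  also have "\<dots> \<le> (\<Prod>k<n. exp (norm x * norm q ^ k))"
  proof (intro prod_mono conjI)
    fix k
    have "norm (1 - x * q ^ k) \<le> 1 + norm x * norm q ^ k"
      by (metis norm_mult norm_power norm_one norm_triangle_ineq4)
    also have "\<dots> \<le> exp (norm x * norm q ^ k)" by (rule exp_ge_add_one_self)
    finally show "norm (1 - x * q ^ k) \<le> exp (norm x * norm q ^ k)" .
  qed auto
  also have "\<dots> = exp (\<Sum>k<n. norm x * norm q ^ k)"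
    by (simp add: exp_sum)
  also have "\<dots> \<le> exp (norm x / (1 - norm q))"
  proof -
    have "(\<Sum>k<n. norm x * norm q ^ k) \<le> (\<Sum>k. norm x * norm q ^ k)"
      using assms by (intro sum_le_suminf summable_mult summable_geometric) auto
    also have "\<dots> = norm x / (1 - norm q)"
      using assms by (simp add: suminf_mult suminf_geometric divide_simps)
    finally show ?thesis by simp
  qed
  finally show ?thesis .
qed

lemma qpoch_inf_norm_le:
  fixes x q :: complex
  assumes "norm q < 1"
  shows "norm (qpoch_inf x q) \<le> exp (norm x / (1 - norm q))"
proof -
  have "(\<lambda>n. norm (qpoch x q n)) \<longlonglongrightarrow> norm (qpoch_inf x q)"
    by (intro tendsto_norm qpoch_LIMSEQ assms)
  then show ?thesis
    by (rule LIMSEQ_le_const2) (use qpoch_norm_le[OF assms] in auto)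
qed

lemma bounded_away:
  fixes X :: "nat \<Rightarrow> complex"
  assumes "X \<longlonglongrightarrow> L" "L \<noteq> 0" "\<And>n. X n \<noteq> 0"
  shows "\<exists>d>0. \<forall>n. d \<le> norm (X n)"
proof -
  have "(\<lambda>n. norm (X n)) \<longlonglongrightarrow> norm L" using assms(1) by (rule tendsto_norm)
  moreover have "norm L / 2 < norm L" using assms(2) by simp
  ultimately have "eventually (\<lambda>n. norm L / 2 < norm (X n)) sequentially"
    by (rule order_tendstoD)
  then obtain N where N: "\<And>n. n \<ge> N \<Longrightarrow> norm L / 2 < norm (X n)"
    by (auto simp: eventually_sequentially)
  define d where "d = min (norm L / 2) (Min (insert 1 ((\<lambda>n. norm (X n)) ` {..<N})))"
  have "d > 0" using assms(2,3) by (auto simp: d_def)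
  moreover have "d \<le> norm (X n)" for n
  proof (cases "n \<ge> N")
    case True then show ?thesis using N[of n] by (auto simp: d_def)
  next
    case False
    then have "Min (insert 1 ((\<lambda>n. norm (X n)) ` {..<N})) \<le> norm (X n)"
      by (intro Min_le) auto
    then show ?thesis by (auto simp: d_def)
  qed
  ultimately show ?thesis by blast
qed

lemma qpoch_lower:
  fixes x q :: complex
  assumes "norm q < 1" "\<And>k. x * q ^ k \<noteq> 1"
  shows "\<exists>d>0. \<forall>n. d \<le> norm (qpoch x q n)"
  by (rule bounded_away[OF qpoch_LIMSEQ[OF assms(1)] qpoch_inf_nonzero[OF assms]])
     (use assms qpoch_nonzero in metis)

lemma qpoch_ratio_bounded:
  fixes x y q :: complex
  assumes "norm q < 1" "\<And>k. y * q ^ k \<noteq> 1"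
  shows "\<exists>K>0. \<forall>n. norm (qpoch x q n / qpoch y q n) \<le> K"
proof -
  obtain d where d: "d > 0" "\<And>n. d \<le> norm (qpoch y q n)"
    using qpoch_lower[OF assms] by blast
  show ?thesis
  proof (intro exI[of _ "exp (norm x / (1 - norm q)) / d"] conjI allI)
    fix n
    have "norm (qpoch x q n / qpoch y q n) = norm (qpoch x q n) / norm (qpoch y q n)"
      by (simp add: norm_divide)
    also have "\<dots> \<le> exp (norm x / (1 - norm q)) / d"
      using d by (intro frac_le qpoch_norm_le assms) auto
    finally show "norm (qpoch x q n / qpoch y q n) \<le> exp (norm x / (1 - norm q)) / d" .
  qed (use d in auto)
qed




lemma qpoch_holo: "(\<lambda>x. qpoch x q n) holomorphic_on S"
  unfolding qpoch_def by (intro holomorphic_intros)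

lemma qpoch_uniform:
  fixes q :: complex
  assumes "norm q < 1"
  shows "uniform_limit (cball x0 r) (\<lambda>n x. qpoch x q n) (\<lambda>x. qpoch_inf x q) sequentially"
proof -
  have "uniform_limit (cball x0 r) (\<lambda>n x. \<Sum>i<n. norm ((1 - x * q ^ i) - 1))
          (\<lambda>x. \<Sum>i. norm ((1 - x * q ^ i) - 1)) sequentially"
  proof (rule Weierstrass_m_test)
    show "summable (\<lambda>n. (norm x0 + r) * norm q ^ n)"
      using assms by (intro summable_mult summable_geometric) auto
    fix n x assume x: "x \<in> cball x0 r"
    have "norm x \<le> norm x0 + r"
      using x norm_triangle_ineq2[of x x0] by (auto simp: dist_norm norm_minus_commute)
    then show "norm (norm ((1 - x * q ^ n) - 1)) \<le> (norm x0 + r) * norm q ^ n"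
      by (simp add: norm_mult norm_power mult_right_mono)
  qed
  then have "uniformly_convergent_on (cball x0 r) (\<lambda>N x. \<Sum>n<N. norm ((1 - x * q ^ n) - 1))"
    unfolding uniformly_convergent_on_def by blast
  then have "uniformly_convergent_on (cball x0 r) (\<lambda>N x. \<Prod>n<N. 1 - x * q ^ n)"
    by (intro uniformly_convergent_on_prod') (auto intro!: continuous_intros)
  then obtain l where l: "uniform_limit (cball x0 r) (\<lambda>N x. \<Prod>n<N. 1 - x * q ^ n) l sequentially"
    unfolding uniformly_convergent_on_def by blast
  have "l x = qpoch_inf x q" if "x \<in> cball x0 r" for x
  proof -
    have "(\<lambda>N. \<Prod>n<N. 1 - x * q ^ n) \<longlonglongrightarrow> l x"
      using tendsto_uniform_limitI[OF l that] .
    moreover have "(\<lambda>N. \<Prod>n<N. 1 - x * q ^ n) \<longlonglongrightarrow> qpoch_inf x q"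
      using qpoch_LIMSEQ[OF assms, of x] by (simp add: qpoch_def)
    ultimately show ?thesis using LIMSEQ_unique by blast
  qed
  have "uniform_limit (cball x0 r) (\<lambda>N x. \<Prod>n<N. 1 - x * q ^ n) (\<lambda>x. qpoch_inf x q) sequentially"
    using l by (subst uniform_limit_cong'[where g="\<lambda>N x. \<Prod>n<N. 1 - x * q ^ n" and i=l]) (auto simp: \<open>\<And>x. x \<in> cball x0 r \<Longrightarrow> l x = qpoch_inf x q\<close>)
  then show ?thesis unfolding qpoch_def .
qed

lemma qpoch_inf_holo:
  fixes q :: complex
  assumes "norm q < 1"
  shows "(\<lambda>x. qpoch_inf x q) holomorphic_on S"
proof -
  have "(\<lambda>x. qpoch_inf x q) holomorphic_on UNIV"
  proof (rule holomorphic_uniform_sequence[where f="\<lambda>n x. qpoch x q n"])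
    fix x :: complex
    show "\<exists>d>0. cball x d \<subseteq> UNIV \<and> uniform_limit (cball x d) (\<lambda>n x. qpoch x q n) (\<lambda>x. qpoch_inf x q) sequentially"
      using qpoch_uniform[OF assms, of x 1] by (intro exI[of _ 1]) auto
  qed (auto intro: qpoch_holo)
  then show ?thesis by (rule holomorphic_on_subset) auto
qed



lemma holo_suminf:
  fixes f :: "nat \<Rightarrow> complex \<Rightarrow> complex"
  assumes S: "open S" and hol: "\<And>n. f n holomorphic_on S"
    and bnd: "\<And>x. x \<in> S \<Longrightarrow> \<exists>d>0. cball x d \<subseteq> S \<and> (\<exists>M. summable M \<and> (\<forall>n. \<forall>y\<in>cball x d. norm (f n y) \<le> M n))"
  shows "(\<lambda>x. \<Sum>n. f n x) holomorphic_on S"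
proof (rule holomorphic_uniform_sequence[where f="\<lambda>N x. \<Sum>n<N. f n x"])
  show "open S" by fact
  show "(\<lambda>x. \<Sum>n<N. f n x) holomorphic_on S" for N
    by (intro holomorphic_on_sum hol)
  fix x assume "x \<in> S"
  then obtain d M where d: "d > 0" "cball x d \<subseteq> S" "summable M" "\<And>n y. y \<in> cball x d \<Longrightarrow> norm (f n y) \<le> M n"
    using bnd by meson
  have "uniform_limit (cball x d) (\<lambda>N x. \<Sum>n<N. f n x) (\<lambda>x. \<Sum>n. f n x) sequentially"
    apply (rule Weierstrass_m_test[where M=M])
    using d(4) apply blast
    using d(3) apply assumption
    done
  then show "\<exists>d>0. cball x d \<subseteq> S \<and> uniform_limit (cball x d) (\<lambda>N x. \<Sum>n<N. f n x) (\<lambda>x. \<Sum>n. f n x) sequentially"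
    using d(1,2) by blast
qed



lemma qq_nonzero:
  fixes q :: complex
  assumes "norm q < 1"
  shows "q * q ^ k \<noteq> 1"
  using small_nonzero[OF assms assms] .

lemma qpoch_qq_nonzero:
  fixes q :: complex
  assumes "norm q < 1"
  shows "qpoch q q n \<noteq> 0"
  using qpoch_nonzero[of n q q] qq_nonzero[OF assms] by blast

lemma geo_bound_summable:
  fixes f :: "nat \<Rightarrow> complex"
  assumes "\<And>n. norm (f n) \<le> K" "norm w < 1"
  shows "summable (\<lambda>n. f n * w ^ n)"
proof (rule summable_comparison_test[where g="\<lambda>n. K * norm w ^ n"])
  show "\<exists>N. \<forall>n\<ge>N. norm (f n * w ^ n) \<le> K * norm w ^ n"
    using assms by (auto simp: norm_mult norm_power intro!: mult_right_mono)
  show "summable (\<lambda>n. K * norm w ^ n)"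
    using assms by (intro summable_mult summable_geometric) auto
qed

lemma qbin_fun:
  fixes q A w :: complex
  assumes q: "norm q < 1" and w: "norm w < 1"
  defines "f \<equiv> \<lambda>n. qpoch A q n / qpoch q q n"
  shows "(1 - w) * (\<Sum>n. f n * w ^ n) = (1 - A * w) * (\<Sum>n. f n * (q * w) ^ n)"
proof -
  obtain K where K: "K > 0" "\<And>n. norm (f n) \<le> K"
    using qpoch_ratio_bounded[OF q qq_nonzero[OF q], of A] unfolding f_def by blast
  have qw: "norm (q * w) < 1"
    using q w by (simp add: norm_mult) (metis mult_le_one norm_ge_zero less_le_not_le mult_strict_mono' mult_1_left order.strict_trans2 less_imp_le)
  have s1: "summable (\<lambda>n. f n * w ^ n)" by (rule geo_bound_summable[OF K(2) w])
  have s2: "summable (\<lambda>n. f n * (q * w) ^ n)" by (rule geo_bound_summable[OF K(2) qw])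
  have rec: "f (Suc n) * (1 - q ^ Suc n) = f n * (1 - A * q ^ n)" for n
    using qpoch_qq_nonzero[OF q, of n] qpoch_qq_nonzero[OF q, of "Suc n"]
    by (simp add: f_def qpoch_Suc field_simps)
  have "(\<lambda>n. f n * w ^ n - f n * (q * w) ^ n) sums ((\<Sum>n. f n * w ^ n) - (\<Sum>n. f n * (q * w) ^ n))"
    using s1 s2 by (intro sums_diff summable_sums)
  moreover have "(\<lambda>n. f n * w ^ n - f n * (q * w) ^ n) = (\<lambda>n. f n * (1 - q ^ n) * w ^ n)"
    by (simp add: power_mult_distrib algebra_simps)
  ultimately have a: "(\<lambda>n. f n * (1 - q ^ n) * w ^ n) sums ((\<Sum>n. f n * w ^ n) - (\<Sum>n. f n * (q * w) ^ n))"
    by simp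
  have "(\<lambda>n. w * (f n * w ^ n) - A * w * (f n * (q * w) ^ n)) sums (w * (\<Sum>n. f n * w ^ n) - A * w * (\<Sum>n. f n * (q * w) ^ n))"
    using s1 s2 by (intro sums_diff sums_mult summable_sums)
  moreover have "(\<lambda>n. w * (f n * w ^ n) - A * w * (f n * (q * w) ^ n)) = (\<lambda>n. f (Suc n) * (1 - q ^ Suc n) * w ^ Suc n)"
  proof (rule ext)
    fix n
    have "f (Suc n) * (1 - q ^ Suc n) * w ^ Suc n = f n * (1 - A * q ^ n) * w ^ Suc n"
      by (simp only: rec)
    then show "w * (f n * w ^ n) - A * w * (f n * (q * w) ^ n) = f (Suc n) * (1 - q ^ Suc n) * w ^ Suc n"
      by (simp add: power_mult_distrib algebra_simps)
  qed
  ultimately have "(\<lambda>n. f (Suc n) * (1 - q ^ Suc n) * w ^ Suc n) sums (w * (\<Sum>n. f n * w ^ n) - A * w * (\<Sum>n. f n * (q * w) ^ n))"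
    by simp
  then have "(\<lambda>n. f n * (1 - q ^ n) * w ^ n) sums (w * (\<Sum>n. f n * w ^ n) - A * w * (\<Sum>n. f n * (q * w) ^ n))"
    by (subst (asm) sums_Suc_iff) simp
  with a have "(\<Sum>n. f n * w ^ n) - (\<Sum>n. f n * (q * w) ^ n) = w * (\<Sum>n. f n * w ^ n) - A * w * (\<Sum>n. f n * (q * w) ^ n)"
    using sums_unique2 by blast
  then show ?thesis by (simp add: algebra_simps)
qed


lemma norm_mult_lt1:
  fixes a b :: complex
  assumes "norm a < 1" "norm b \<le> 1"
  shows "norm (a * b) < 1"
proof -
  have "norm a * norm b \<le> norm a" using assms by (simp add: mult_left_le)
  then show ?thesis using assms by (simp add: norm_mult)
qed

lemma norm_qpow_le1:
  fixes q :: complex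
  assumes "norm q < 1"
  shows "norm (q ^ n) \<le> 1"
  using assms by (simp add: norm_power power_le_one)

lemma qbin_near0:
  fixes q A :: complex and v :: "nat \<Rightarrow> complex"
  assumes q: "norm q < 1" and v: "v \<longlonglongrightarrow> 0"
  shows "(\<lambda>N. \<Sum>n. qpoch A q n / qpoch q q n * v N ^ n) \<longlonglongrightarrow> 1"
proof -
  define f where "f = (\<lambda>n. qpoch A q n / qpoch q q n)"
  obtain K where K: "K > 0" "\<And>n. norm (f n) \<le> K"
    using qpoch_ratio_bounded[OF q qq_nonzero[OF q], of A] unfolding f_def by blast
  have ev: "eventually (\<lambda>N. norm (v N) < 1/2) sequentially"
    using tendsto_norm_zero[OF v] by (rule order_tendstoD) simp
  have bound: "norm ((\<Sum>n. f n * x ^ n) - 1) \<le> 2 * K * norm x" if x: "norm x < 1/2" for x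
  proof -
    have x1: "norm x < 1" using x by simp
    have s: "summable (\<lambda>n. f n * x ^ n)" by (rule geo_bound_summable[OF K(2) x1])
    have "(\<Sum>n. f n * x ^ n) = (\<Sum>n. f (Suc n) * x ^ Suc n) + f 0 * x ^ 0"
      using suminf_split_head[OF s] by simp
    then have "(\<Sum>n. f n * x ^ n) - 1 = (\<Sum>n. f (Suc n) * x ^ Suc n)"
      by (simp add: f_def)
    also have "norm \<dots> \<le> (\<Sum>n. K * norm x ^ Suc n)"
    proof (rule norm_suminf_le)
      show "summable (\<lambda>n. K * norm x ^ Suc n)"
        using x1 by (intro summable_mult summable_Suc_iff[THEN iffD2] summable_geometric) auto
      show "norm (f (Suc n) * x ^ Suc n) \<le> K * norm x ^ Suc n" for n
        using K(2)[of "Suc n"] by (simp add: norm_mult norm_power mult_right_mono del: power_Suc)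
    qed
    also have "\<dots> = K * norm x / (1 - norm x)"
      using x1 by (simp add: suminf_mult suminf_geometric summable_geometric)
    also have "\<dots> \<le> 2 * K * norm x"
    proof -
      have h: "K * norm x * 1 \<le> K * norm x * (2 * (1 - norm x))"
        by (rule mult_left_mono) (use x K in auto)
      have "0 < 1 - norm x" using x1 by simp
      then show ?thesis using h by (simp add: pos_divide_le_eq algebra_simps)
    qed
    finally show ?thesis .
  qed
  have "(\<lambda>N. 2 * K * norm (v N)) \<longlonglongrightarrow> 0"
    using v by (intro tendsto_mult_right_zero tendsto_norm_zero)
  then have "(\<lambda>N. (\<Sum>n. f n * v N ^ n) - 1) \<longlonglongrightarrow> 0"
    by (rule Lim_null_comparison[rotated]) (use ev bound in \<open>auto elim: eventually_mono\<close>)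
  then show ?thesis
    by (simp add: f_def LIM_zero_iff)
qed

theorem qbinomial:
  fixes q A z :: complex
  assumes q: "norm q < 1" and z: "norm z < 1"
  shows "(\<lambda>n. qpoch A q n / qpoch q q n * z ^ n) sums (qpoch_inf (A * z) q / qpoch_inf z q)"
proof -
  define f where "f = (\<lambda>n. qpoch A q n / qpoch q q n)"
  define F where "F = (\<lambda>w. \<Sum>n. f n * w ^ n)"
  obtain K where K: "K > 0" "\<And>n. norm (f n) \<le> K"
    using qpoch_ratio_bounded[OF q qq_nonzero[OF q], of A] unfolding f_def by blast
  have zN: "norm (z * q ^ N) < 1" for N
    by (rule norm_mult_lt1[OF z norm_qpow_le1[OF q]])
  have iter: "F z * qpoch z q N = qpoch (A * z) q N * F (z * q ^ N)" for N
  proof (induction N)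
    case 0 then show ?case by simp
  next
    case (Suc N)
    have fe: "(1 - z * q ^ N) * F (z * q ^ N) = (1 - A * (z * q ^ N)) * F (q * (z * q ^ N))"
      unfolding F_def f_def by (rule qbin_fun[OF q zN])
    have "F z * qpoch z q (Suc N) = qpoch (A * z) q N * ((1 - z * q ^ N) * F (z * q ^ N))"
      using Suc by (simp add: qpoch_Suc mult_ac)
    also have "\<dots> = qpoch (A * z) q (Suc N) * F (z * q ^ Suc N)"
      unfolding fe by (simp add: qpoch_Suc mult_ac)
    finally show ?case .
  qed
  have "(\<lambda>N. F z * qpoch z q N) \<longlonglongrightarrow> F z * qpoch_inf z q"
    by (intro tendsto_intros qpoch_LIMSEQ q)
  moreover have "(\<lambda>N. qpoch (A * z) q N * F (z * q ^ N)) \<longlonglongrightarrow> qpoch_inf (A * z) q * 1"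
  proof (intro tendsto_intros qpoch_LIMSEQ q)
    have "(\<lambda>N. z * q ^ N) \<longlonglongrightarrow> 0"
      using q by (intro tendsto_mult_right_zero LIMSEQ_power_zero) auto
    then show "(\<lambda>N. F (z * q ^ N)) \<longlonglongrightarrow> 1"
      unfolding F_def f_def by (rule qbin_near0[OF q])
  qed
  ultimately have "F z * qpoch_inf z q = qpoch_inf (A * z) q"
    using iter LIMSEQ_unique by auto
  moreover have "qpoch_inf z q \<noteq> 0"
    by (rule qpoch_inf_nonzero[OF q small_nonzero[OF z q]])
  ultimately have "F z = qpoch_inf (A * z) q / qpoch_inf z q"
    by (simp add: field_simps)
  moreover have "summable (\<lambda>n. f n * z ^ n)" by (rule geo_bound_summable[OF K(2) z])
  ultimately show ?thesis
    unfolding F_def f_def by (metis summable_sums)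
qed



lemma infsum_suminf:
  fixes f :: "nat \<Rightarrow> 'a::banach"
  assumes "summable (\<lambda>n. norm (f n))"
  shows "infsum f UNIV = suminf f"
  using norm_summable_imp_has_sum[OF assms summable_sums[OF summable_norm_cancel[OF assms]]]
  by (rule infsumI)

lemma suminf_swap:
  fixes g :: "nat \<Rightarrow> nat \<Rightarrow> complex"
  assumes s1: "\<And>n. summable (\<lambda>m. norm (g n m))"
    and s2: "summable (\<lambda>n. \<Sum>m. norm (g n m))"
  shows "(\<Sum>n. \<Sum>m. g n m) = (\<Sum>m. \<Sum>n. g n m)"
    and "summable (\<lambda>n. \<Sum>m. g n m)" and "summable (\<lambda>m. \<Sum>n. g n m)"
proof -
  have abs1: "(\<lambda>m. norm (g n m)) summable_on UNIV" for n
    using s1[of n] by (intro norm_summable_imp_summable_on) simp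
  have eq1: "infsum (\<lambda>m. norm (g n m)) UNIV = (\<Sum>m. norm (g n m))" for n
    using s1[of n] by (intro infsum_suminf) simp
  have "(\<lambda>n. norm (infsum (\<lambda>m. norm (g n m)) UNIV)) summable_on UNIV"
    unfolding eq1 using s2 by (intro norm_summable_imp_summable_on) (simp add: suminf_nonneg s1)
  then have absS: "(\<lambda>p. norm ((\<lambda>(n, m). g n m) p)) summable_on UNIV \<times> UNIV"
    using Infinite_Sum.abs_summable_on_Sigma_iff[where f="\<lambda>(n, m). g n m" and A=UNIV and B="\<lambda>_. UNIV"] abs1 by auto
  then have sumS: "(\<lambda>(n, m). g n m) summable_on UNIV \<times> UNIV"
    by (rule abs_summable_summable)
  have sw: "infsum (\<lambda>n. infsum (\<lambda>m. g n m) UNIV) UNIV = infsum (\<lambda>m. infsum (\<lambda>n. g n m) UNIV) UNIV"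
    by (rule infsum_swap_banach[OF sumS])
  have absT: "(\<lambda>p. norm ((\<lambda>(m, n). g n m) p)) summable_on UNIV \<times> UNIV"
  proof -
    have "(\<lambda>p. norm ((\<lambda>(n, m). g n m) p)) \<circ> prod.swap summable_on UNIV \<times> UNIV"
      using absS by (subst summable_on_reindex[symmetric]) (auto simp: product_swap)
    then show ?thesis by (simp add: o_def case_prod_unfold)
  qed
  have T: "(\<forall>m\<in>UNIV. (\<lambda>n. norm (g n m)) summable_on UNIV) \<and>
     (\<lambda>m. norm (infsum (\<lambda>n. norm (g n m)) UNIV)) summable_on UNIV"
    using Infinite_Sum.abs_summable_on_Sigma_iff[where f="\<lambda>(m, n). g n m" and A=UNIV and B="\<lambda>_. UNIV"] absT by auto
  have inner2: "summable (\<lambda>n. norm (g n m))" for m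
    using T by (intro summable_on_imp_summable) auto
  have eq2: "infsum (\<lambda>n. norm (g n m)) UNIV = (\<Sum>n. norm (g n m))" for m
    using inner2[of m] by (intro infsum_suminf) simp
  have s3: "summable (\<lambda>m. \<Sum>n. norm (g n m))"
  proof -
    have "(\<lambda>m. norm (infsum (\<lambda>n. norm (g n m)) UNIV)) summable_on UNIV" using T by blast
    then have "summable (\<lambda>m. norm (infsum (\<lambda>n. norm (g n m)) UNIV))" by (rule summable_on_imp_summable)
    then show ?thesis unfolding eq2 by (simp add: suminf_nonneg inner2)
  qed
  have e1: "infsum (\<lambda>m. g n m) UNIV = (\<Sum>m. g n m)" for n by (rule infsum_suminf[OF s1])
  have e2: "infsum (\<lambda>n. g n m) UNIV = (\<Sum>n. g n m)" for m by (rule infsum_suminf[OF inner2])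
  have n1: "summable (\<lambda>n. norm (\<Sum>m. g n m))"
    by (rule summable_comparison_test[OF _ s2]) (auto intro!: summable_norm s1 exI[of _ 0])
  have n2: "summable (\<lambda>m. norm (\<Sum>n. g n m))"
    by (rule summable_comparison_test[OF _ s3]) (auto intro!: summable_norm inner2 exI[of _ 0])
  show "summable (\<lambda>n. \<Sum>m. g n m)" using n1 by (rule summable_norm_cancel)
  show "summable (\<lambda>m. \<Sum>n. g n m)" using n2 by (rule summable_norm_cancel)
  show "(\<Sum>n. \<Sum>m. g n m) = (\<Sum>m. \<Sum>n. g n m)"
    using sw unfolding e1 e2 infsum_suminf[OF n1] infsum_suminf[OF n2] .
qed


lemma qpoch_inf_shift_nonzero:
  fixes q x :: complex
  assumes q: "norm q < 1" and x: "\<And>k. x * q ^ k \<noteq> 1"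
  shows "qpoch_inf (x * q ^ n) q \<noteq> 0"
  using x[of "n + k" for k] by (intro qpoch_inf_nonzero q) (simp add: power_add mult_ac)

lemma qpoch_tail:
  fixes q x :: complex
  assumes q: "norm q < 1" and x: "\<And>k. k < n \<Longrightarrow> x * q ^ k \<noteq> 1"
  shows "qpoch_inf (x * q ^ n) q = qpoch_inf x q / qpoch x q n"
  using qpoch_inf_split[OF q, of x n] qpoch_nonzero[of n x q] x by (simp add: field_simps)

lemma small_all:
  fixes x q :: complex
  assumes "norm x < 1" "norm q < 1"
  shows "\<And>k. x * q ^ k \<noteq> 1"
  using small_nonzero[OF assms] .

theorem heine:
  fixes q A B C z :: complex
  assumes q: "norm q < 1" and B: "norm B < 1" "B \<noteq> 0" and z: "norm z < 1"
    and C: "\<And>k. C * q ^ k \<noteq> 1" and Az: "\<And>k. A * z * q ^ k \<noteq> 1"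
  shows "(\<lambda>n. qpoch A q n * qpoch B q n / (qpoch q q n * qpoch C q n) * z ^ n) sums
    (qpoch_inf B q * qpoch_inf (A * z) q / (qpoch_inf C q * qpoch_inf z q) *
     (\<Sum>m. qpoch (C / B) q m * qpoch z q m / (qpoch q q m * qpoch (A * z) q m) * B ^ m))"
proof -
  define a where "a = (\<lambda>n. qpoch A q n / qpoch q q n)"
  define c where "c = (\<lambda>m. qpoch (C / B) q m / qpoch q q m)"
  define P where "P = qpoch_inf B q / qpoch_inf C q"
  define g where "g = (\<lambda>n m. a n * c m * z ^ n * B ^ m * q ^ (n * m))"
  obtain Ka where Ka: "Ka > 0" "\<And>n. norm (a n) \<le> Ka"
    using qpoch_ratio_bounded[OF q qq_nonzero[OF q], of A] unfolding a_def by blast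
  obtain Kc where Kc: "Kc > 0" "\<And>n. norm (c n) \<le> Kc"
    using qpoch_ratio_bounded[OF q qq_nonzero[OF q], of "C / B"] unfolding c_def by blast
  have qpow: "norm (q ^ k) \<le> 1" for k by (rule norm_qpow_le1[OF q])
  have gb: "norm (g n m) \<le> Ka * Kc * norm z ^ n * norm B ^ m" for n m
  proof -
    have "norm (g n m) = norm (a n) * norm (c m) * norm z ^ n * norm B ^ m * norm (q ^ (n * m))"
      by (simp add: g_def norm_mult norm_power)
    also have "\<dots> \<le> Ka * Kc * norm z ^ n * norm B ^ m * 1"
      by (intro mult_mono Ka Kc qpow mult_nonneg_nonneg) (use Ka Kc in auto)
    finally show ?thesis by simp
  qed
  have sB: "summable (\<lambda>m. norm B ^ m)" using B by (intro summable_geometric) auto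
  have s1: "summable (\<lambda>m. norm (g n m))" for n
    by (rule summable_comparison_test[where g="\<lambda>m. (Ka * Kc * norm z ^ n) * norm B ^ m"])
       (use gb sB in \<open>auto intro!: summable_mult\<close>)
  have s2: "summable (\<lambda>n. \<Sum>m. norm (g n m))"
  proof (rule summable_comparison_test[where g="\<lambda>n. (Ka * Kc * (\<Sum>m. norm B ^ m)) * norm z ^ n"])
    show "summable (\<lambda>n. (Ka * Kc * (\<Sum>m. norm B ^ m)) * norm z ^ n)"
      using z by (intro summable_mult summable_geometric) auto
    show "\<exists>N. \<forall>n\<ge>N. norm (\<Sum>m. norm (g n m)) \<le> Ka * Kc * (\<Sum>m. norm B ^ m) * norm z ^ n"
    proof (intro exI allI impI)
      fix n :: nat
      have "norm (\<Sum>m. norm (g n m)) = (\<Sum>m. norm (g n m))"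
        using s1[of n] by (simp add: suminf_nonneg)
      also have "\<dots> \<le> (\<Sum>m. (Ka * Kc * norm z ^ n) * norm B ^ m)"
        by (intro suminf_le s1 summable_mult sB) (use gb in auto)
      also have "\<dots> = Ka * Kc * (\<Sum>m. norm B ^ m) * norm z ^ n"
        using sB by (simp add: suminf_mult)
      finally show "norm (\<Sum>m. norm (g n m)) \<le> Ka * Kc * (\<Sum>m. norm B ^ m) * norm z ^ n" .
    qed
  qed
  have Binf: "qpoch_inf (B * q ^ n) q \<noteq> 0" for n
    by (rule qpoch_inf_shift_nonzero[OF q small_all[OF B(1) q]])
  have Cinf: "qpoch_inf (C * q ^ n) q \<noteq> 0" for n
    by (rule qpoch_inf_shift_nonzero[OF q C])
  have Cn: "qpoch C q n \<noteq> 0" for n using qpoch_nonzero C by blast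
  have Bn: "qpoch B q n \<noteq> 0" for n using qpoch_nonzero small_all[OF B(1) q] by blast
  have step1: "qpoch A q n * qpoch B q n / (qpoch q q n * qpoch C q n) * z ^ n = P * (\<Sum>m. g n m)" for n
  proof -
    have Bq: "norm (B * q ^ n) < 1" by (rule norm_mult_lt1[OF B(1) qpow])
    have qb: "(\<lambda>m. c m * (B * q ^ n) ^ m) sums (qpoch_inf (C * q ^ n) q / qpoch_inf (B * q ^ n) q)"
      using qbinomial[OF q Bq, of "C / B"] B(2) unfolding c_def by (simp add: mult_ac)
    have "(\<lambda>m. a n * z ^ n * (c m * (B * q ^ n) ^ m)) sums (a n * z ^ n * (qpoch_inf (C * q ^ n) q / qpoch_inf (B * q ^ n) q))"
      by (rule sums_mult[OF qb])
    moreover have "(\<lambda>m. a n * z ^ n * (c m * (B * q ^ n) ^ m)) = g n"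
      by (rule ext) (simp add: g_def power_mult_distrib power_mult[symmetric] mult.commute[of n] mult_ac)
    ultimately have "(\<Sum>m. g n m) = a n * z ^ n * (qpoch_inf (C * q ^ n) q / qpoch_inf (B * q ^ n) q)"
      by (simp add: sums_iff)
    moreover have "qpoch_inf B q = qpoch B q n * qpoch_inf (B * q ^ n) q"
      by (rule qpoch_inf_split[OF q])
    moreover have "qpoch_inf C q = qpoch C q n * qpoch_inf (C * q ^ n) q"
      by (rule qpoch_inf_split[OF q])
    ultimately show ?thesis
      using Binf[of n] Cinf[of n] Cn[of n] Bn[of n] qpoch_qq_nonzero[OF q, of n]
      by (simp add: P_def a_def field_simps)
  qed
  have step3: "(\<Sum>n. g n m) = qpoch_inf (A * z) q / qpoch_inf z q *
      (qpoch (C / B) q m * qpoch z q m / (qpoch q q m * qpoch (A * z) q m) * B ^ m)" for m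
  proof -
    have zq: "norm (z * q ^ m) < 1" by (rule norm_mult_lt1[OF z qpow])
    have qb: "(\<lambda>n. a n * (z * q ^ m) ^ n) sums (qpoch_inf (A * (z * q ^ m)) q / qpoch_inf (z * q ^ m) q)"
      using qbinomial[OF q zq, of A] unfolding a_def .
    have "(\<lambda>n. c m * B ^ m * (a n * (z * q ^ m) ^ n)) sums (c m * B ^ m * (qpoch_inf (A * (z * q ^ m)) q / qpoch_inf (z * q ^ m) q))"
      by (rule sums_mult[OF qb])
    moreover have "(\<lambda>n. c m * B ^ m * (a n * (z * q ^ m) ^ n)) = (\<lambda>n. g n m)"
      by (rule ext) (simp add: g_def power_mult_distrib power_mult[symmetric] mult_ac)
    ultimately have "(\<Sum>n. g n m) = c m * B ^ m * (qpoch_inf (A * z * q ^ m) q / qpoch_inf (z * q ^ m) q)"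
      by (simp add: sums_iff mult_ac)
    also have "qpoch_inf (A * z * q ^ m) q = qpoch_inf (A * z) q / qpoch (A * z) q m"
      by (rule qpoch_tail[OF q]) (use Az in auto)
    also have "qpoch_inf (z * q ^ m) q = qpoch_inf z q / qpoch z q m"
      by (rule qpoch_tail[OF q]) (use small_all[OF z q] in auto)
    finally show ?thesis
      using qpoch_inf_nonzero[OF q small_all[OF z q]] qpoch_nonzero[of m "A * z" q] Az
        qpoch_nonzero[of m z q] small_all[OF z q] qpoch_qq_nonzero[OF q, of m]
      by (simp add: c_def field_simps)
  qed
  have sw: "(\<Sum>n. \<Sum>m. g n m) = (\<Sum>m. \<Sum>n. g n m)" "summable (\<lambda>n. \<Sum>m. g n m)" "summable (\<lambda>m. \<Sum>n. g n m)"
    using suminf_swap[OF s1 s2] by auto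
  have "(\<lambda>n. P * (\<Sum>m. g n m)) sums (P * (\<Sum>m. \<Sum>n. g n m))"
    using sums_mult[OF summable_sums[OF sw(2)], of P] sw(1) by simp
  moreover have "(\<Sum>m. \<Sum>n. g n m) = qpoch_inf (A * z) q / qpoch_inf z q *
     (\<Sum>m. qpoch (C / B) q m * qpoch z q m / (qpoch q q m * qpoch (A * z) q m) * B ^ m)"
  proof -
    have "summable (\<lambda>m. qpoch_inf (A * z) q / qpoch_inf z q *
      (qpoch (C / B) q m * qpoch z q m / (qpoch q q m * qpoch (A * z) q m) * B ^ m))"
      using sw(3) unfolding step3 .
    moreover have "qpoch_inf (A * z) q / qpoch_inf z q \<noteq> 0"
      using qpoch_inf_nonzero[OF q small_all[OF z q]] qpoch_inf_nonzero[OF q, of "A*z"] Az by (auto simp: mult_ac)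
    ultimately have "summable (\<lambda>m. qpoch (C / B) q m * qpoch z q m / (qpoch q q m * qpoch (A * z) q m) * B ^ m)"
      by (rule summable_mult_D)
    then show ?thesis unfolding step3 by (rule suminf_mult)
  qed
  ultimately show ?thesis
    unfolding step1 P_def by (simp add: mult_ac)
qed



definition phi :: "complex \<Rightarrow> complex \<Rightarrow> complex \<Rightarrow> complex \<Rightarrow> complex \<Rightarrow> nat \<Rightarrow> complex" where
  "phi q A B C z n = qpoch A q n * qpoch B q n / (qpoch q q n * qpoch C q n) * z ^ n"

lemma heine_phi:
  fixes q A B C z :: complex
  assumes q: "norm q < 1" and B: "norm B < 1" "B \<noteq> 0" and z: "norm z < 1"
    and C: "\<And>k. C * q ^ k \<noteq> 1" and Az: "\<And>k. A * z * q ^ k \<noteq> 1"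
  shows "phi q A B C z sums
    (qpoch_inf B q * qpoch_inf (A * z) q / (qpoch_inf C q * qpoch_inf z q) * suminf (phi q (C / B) z (A * z) B))"
  using heine[OF assms] unfolding phi_def by (simp add: mult_ac)

lemma phi_comm: "phi q A B C z = phi q B A C z"
  by (rule ext) (simp add: phi_def mult_ac)

theorem qgauss:
  fixes q A B C :: complex
  assumes q: "norm q < 1" and B: "norm B < 1" "B \<noteq> 0" and A: "A \<noteq> 0"
    and z: "norm (C / (A * B)) < 1"
    and C: "\<And>k. C * q ^ k \<noteq> 1" and CB: "\<And>k. C / B * q ^ k \<noteq> 1"
  shows "phi q A B C (C / (A * B)) sums
    (qpoch_inf (C / A) q * qpoch_inf (C / B) q / (qpoch_inf C q * qpoch_inf (C / (A * B)) q))"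
proof -
  define z where "z = C / (A * B)"
  have Az: "A * z = C / B" using A by (simp add: z_def)
  have h: "phi q A B C z sums
    (qpoch_inf B q * qpoch_inf (C / B) q / (qpoch_inf C q * qpoch_inf z q) * suminf (phi q (C / B) z (C / B) B))"
  proof -
    have z1: "norm z < 1" using z by (simp add: z_def)
    have Az': "A * z * q ^ k \<noteq> 1" for k using CB[of k] by (simp add: Az)
    show ?thesis using heine_phi[OF q B z1 C Az'] unfolding Az .
  qed
  have CBn: "qpoch (C / B) q n \<noteq> 0" for n using qpoch_nonzero CB by blast
  have "phi q (C / B) z (C / B) B = (\<lambda>n. qpoch z q n / qpoch q q n * B ^ n)"
    by (rule ext) (use CBn in \<open>simp add: phi_def field_simps\<close>)
  then have "suminf (phi q (C / B) z (C / B) B) = qpoch_inf (z * B) q / qpoch_inf B q"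
    using qbinomial[OF q B(1), of z] by (simp add: sums_iff)
  moreover have "z * B = C / A" using B(2) by (simp add: z_def)
  moreover have "qpoch_inf B q \<noteq> 0" by (rule qpoch_inf_nonzero[OF q small_all[OF B(1) q]])
  ultimately have S: "qpoch_inf B q * suminf (phi q (C / B) z (C / B) B) = qpoch_inf (C / A) q"
    by (simp add: field_simps)
  have "qpoch_inf B q * qpoch_inf (C / B) q / (qpoch_inf C q * qpoch_inf z q) * suminf (phi q (C / B) z (C / B) B)
     = qpoch_inf (C / B) q / (qpoch_inf C q * qpoch_inf z q) * (qpoch_inf B q * suminf (phi q (C / B) z (C / B) B))"
    by (simp add: field_simps)
  also have "\<dots> = qpoch_inf (C / A) q * qpoch_inf (C / B) q / (qpoch_inf C q * qpoch_inf z q)"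
    unfolding S by (simp add: field_simps)
  finally have X: "qpoch_inf B q * qpoch_inf (C / B) q / (qpoch_inf C q * qpoch_inf z q) * suminf (phi q (C / B) z (C / B) B)
     = qpoch_inf (C / A) q * qpoch_inf (C / B) q / (qpoch_inf C q * qpoch_inf z q)" .
  show ?thesis using h[unfolded X] unfolding z_def .
qed

theorem euler:
  fixes q A B C z :: complex
  assumes q: "norm q < 1" and B: "norm B < 1" "B \<noteq> 0" and z: "norm z < 1" "z \<noteq> 0"
    and A: "A \<noteq> 0" and CB: "norm (C / B) < 1" "C \<noteq> 0" and w: "norm (A * B * z / C) < 1"
    and C: "\<And>k. C * q ^ k \<noteq> 1" and Az: "\<And>k. A * z * q ^ k \<noteq> 1"
  shows "suminf (phi q A B C z) = qpoch_inf (A * B * z / C) q / qpoch_inf z q *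
            suminf (phi q (C / A) (C / B) C (A * B * z / C))"
proof -
  have nz: "qpoch_inf x q \<noteq> 0" if "norm x < 1" for x
    by (rule qpoch_inf_nonzero[OF q small_all[OF that q]])
  have Bz: "norm (B * z) < 1" using B z by (simp add: norm_mult_lt1 less_imp_le)
  have Bz': "norm (z * B) < 1" using Bz by (simp add: mult.commute)
  have s1: "suminf (phi q A B C z) = qpoch_inf B q * qpoch_inf (A * z) q / (qpoch_inf C q * qpoch_inf z q) *
       suminf (phi q (C / B) z (A * z) B)"
    using heine_phi[OF q B z(1) C Az] by (simp add: sums_iff)
  have s2: "suminf (phi q z (C / B) (A * z) B) = qpoch_inf (C / B) q * qpoch_inf (z * B) q / (qpoch_inf (A * z) q * qpoch_inf B q) *
       suminf (phi q (A * z / (C / B)) B (z * B) (C / B))"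
    using heine_phi[OF q CB(1) _ B(1) Az, of z] CB B by (auto simp: sums_iff small_all[OF Bz' q])
  have e2: "A * z / (C / B) = A * B * z / C" using B(2) CB(2) by (simp add: field_simps)
  have s3: "suminf (phi q B (A * B * z / C) (B * z) (C / B)) = qpoch_inf (A * B * z / C) q * qpoch_inf C q / (qpoch_inf (B * z) q * qpoch_inf (C / B) q) *
       suminf (phi q ((B * z) / (A * B * z / C)) (C / B) C (A * B * z / C))"
  proof -
    have "A * B * z / C \<noteq> 0" using A B z CB by auto
    moreover have "B * (C / B) = C" using B(2) by simp
    ultimately show ?thesis
      using heine_phi[OF q w _ CB(1) small_all[OF Bz q], of B] C by (auto simp: sums_iff)
  qed
  have e3: "(B * z) / (A * B * z / C) = C / A" using A B(2) z(2) CB(2) by (simp add: field_simps)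
  have p1: "phi q (C / B) z (A * z) B = phi q z (C / B) (A * z) B" by (rule phi_comm)
  have p2: "phi q (A * B * z / C) B (z * B) (C / B) = phi q B (A * B * z / C) (B * z) (C / B)"
    by (simp add: phi_comm mult.commute)
  have nzAz: "qpoch_inf (A * z) q \<noteq> 0" by (rule qpoch_inf_nonzero[OF q]) (use Az in \<open>simp add: mult_ac\<close>)
  have nzC: "qpoch_inf C q \<noteq> 0" by (rule qpoch_inf_nonzero[OF q C])
  show ?thesis
    unfolding s1 p1 s2 e2 p2 s3 e3
    using nz[OF B(1)] nz[OF CB(1)] nz[OF Bz] nz[OF z(1)] nzAz nzC
    by (simp add: mult.commute[of z B] field_simps)
qed



lemma qpoch_inf_holo_comp:
  fixes q :: complex
  assumes q: "norm q < 1" and g: "g holomorphic_on S"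
  shows "(\<lambda>x. qpoch_inf (g x) q) holomorphic_on S"
  using holomorphic_on_compose[OF g qpoch_inf_holo[OF q]] by (simp add: o_def)

lemma qpoch_holo_comp:
  assumes g: "g holomorphic_on S"
  shows "(\<lambda>x. qpoch (g x) q n) holomorphic_on S"
  unfolding qpoch_def by (intro holomorphic_intros g)

lemma qpoch_qq_lower:
  fixes q :: complex
  assumes q: "norm q < 1"
  shows "\<exists>d>0. \<forall>n. d \<le> norm (qpoch q q n)"
  by (rule qpoch_lower[OF q qq_nonzero[OF q]])

lemma qpoch_shift_inf:
  fixes q x :: complex
  assumes q: "norm q < 1" and x: "\<And>k. x * q ^ k \<noteq> 1"
  shows "qpoch_inf x q / qpoch x q n = qpoch_inf (x * q ^ n) q"
  using qpoch_tail[OF q, of n x] x by simp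

lemma phi_summable:
  fixes q A B C z :: complex
  assumes q: "norm q < 1" and z: "norm z < 1" and C: "\<And>k. C * q ^ k \<noteq> 1"
  shows "summable (phi q A B C z)"
proof -
  obtain d1 where d1: "d1 > 0" "\<And>n. d1 \<le> norm (qpoch q q n)" using qpoch_qq_lower[OF q] by blast
  obtain d2 where d2: "d2 > 0" "\<And>n. d2 \<le> norm (qpoch C q n)" using qpoch_lower[OF q C] by blast
  define K where "K = exp (norm A / (1 - norm q)) * exp (norm B / (1 - norm q)) / (d1 * d2)"
  have "norm (qpoch A q n * qpoch B q n / (qpoch q q n * qpoch C q n)) \<le> K" for n
  proof -
    have "norm (qpoch A q n * qpoch B q n / (qpoch q q n * qpoch C q n)) =
      norm (qpoch A q n) * norm (qpoch B q n) / (norm (qpoch q q n) * norm (qpoch C q n))"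
      by (simp add: norm_mult norm_divide)
    also have "\<dots> \<le> K" unfolding K_def
      by (intro frac_le mult_mono qpoch_norm_le q mult_pos_pos d1 d2 mult_nonneg_nonneg) (use d1 d2 in auto)
    finally show ?thesis .
  qed
  then show ?thesis unfolding phi_def by (rule geo_bound_summable[OF _ z])
qed

lemma phi_times_inf:
  fixes q A B C z :: complex
  assumes q: "norm q < 1" and z: "norm z < 1" and C: "\<And>k. C * q ^ k \<noteq> 1"
  shows "qpoch_inf C q * suminf (phi q A B C z) =
    (\<Sum>n. qpoch A q n * qpoch B q n / qpoch q q n * z ^ n * qpoch_inf (C * q ^ n) q)"
proof -
  have "qpoch_inf C q * suminf (phi q A B C z) = (\<Sum>n. qpoch_inf C q * phi q A B C z n)"
    using phi_summable[OF q z C] by (rule suminf_mult[symmetric])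
  also have "\<dots> = (\<Sum>n. qpoch A q n * qpoch B q n / qpoch q q n * z ^ n * qpoch_inf (C * q ^ n) q)"
  proof (rule suminf_cong)
    fix n
    have sp: "qpoch_inf C q = qpoch C q n * qpoch_inf (C * q ^ n) q" by (rule qpoch_inf_split[OF q])
    have "qpoch C q n \<noteq> 0" using qpoch_nonzero C by blast
    then show "qpoch_inf C q * phi q A B C z n = qpoch A q n * qpoch B q n / qpoch q q n * z ^ n * qpoch_inf (C * q ^ n) q"
      unfolding sp phi_def using qpoch_qq_nonzero[OF q, of n] by (simp add: field_simps)
  qed
  finally show ?thesis .
qed


lemma qpoch_norm_le_R:
  fixes q x :: complex
  assumes q: "norm q < 1" and "norm x \<le> R"
  shows "norm (qpoch x q n) \<le> exp (R / (1 - norm q))"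
proof -
  have "norm x / (1 - norm q) \<le> R / (1 - norm q)" using assms by (intro divide_right_mono) auto
  then show ?thesis using qpoch_norm_le[OF q, of x n] by (meson exp_le_cancel_iff order.trans)
qed

lemma qpoch_inf_norm_le_R:
  fixes q x :: complex
  assumes q: "norm q < 1" and "norm x \<le> R"
  shows "norm (qpoch_inf x q) \<le> exp (R / (1 - norm q))"
proof -
  have "norm x / (1 - norm q) \<le> R / (1 - norm q)" using assms by (intro divide_right_mono) auto
  then show ?thesis using qpoch_inf_norm_le[OF q, of x] by (meson exp_le_cancel_iff order.trans)
qed

lemma norm_mult_qpow_le:
  fixes q y :: complex
  assumes q: "norm q < 1" and "norm y \<le> R"
  shows "norm (y * q ^ n) \<le> R"
proof -
  have "norm (y * q ^ n) = norm y * norm (q ^ n)" by (simp add: norm_mult)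
  also have "\<dots> \<le> norm y * 1" by (intro mult_left_mono norm_qpow_le1 q) auto
  finally show ?thesis using assms by simp
qed

lemma L_holo:
  fixes q z :: complex and f :: "nat \<Rightarrow> complex"
  assumes q: "norm q < 1" and z: "norm z < 1" and K: "\<And>n. norm (f n) \<le> K"
  shows "(\<lambda>C. \<Sum>n. f n * z ^ n * qpoch_inf (C * q ^ n) q) holomorphic_on S"
proof -
  have "(\<lambda>C. \<Sum>n. f n * z ^ n * qpoch_inf (C * q ^ n) q) holomorphic_on UNIV"
  proof (rule holo_suminf)
    show "(\<lambda>C. f n * z ^ n * qpoch_inf (C * q ^ n) q) holomorphic_on UNIV" for n
      by (intro holomorphic_intros qpoch_inf_holo_comp q)
    fix x :: complex
    define E where "E = exp ((norm x + 1) / (1 - norm q))"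
    show "\<exists>d>0. cball x d \<subseteq> UNIV \<and> (\<exists>M. summable M \<and> (\<forall>n. \<forall>y\<in>cball x d. norm (f n * z ^ n * qpoch_inf (y * q ^ n) q) \<le> M n))"
    proof (intro exI conjI allI ballI)
      show "summable (\<lambda>n. (K * E) * norm z ^ n)" using z by (intro summable_mult summable_geometric) auto
      fix n y assume y: "y \<in> cball x 1"
      have ny: "norm y \<le> norm x + 1"
        using y norm_triangle_ineq2[of y x] by (auto simp: dist_norm norm_minus_commute)
      have "norm (f n * z ^ n * qpoch_inf (y * q ^ n) q) = norm (f n) * norm z ^ n * norm (qpoch_inf (y * q ^ n) q)"
        by (simp add: norm_mult norm_power)
      also have "\<dots> \<le> K * norm z ^ n * E"
        unfolding E_def using order.trans[OF norm_ge_zero K]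
        by (intro mult_mono K qpoch_inf_norm_le_R q norm_mult_qpow_le ny) auto
      finally show "norm (f n * z ^ n * qpoch_inf (y * q ^ n) q) \<le> K * E * norm z ^ n" by (simp add: mult_ac)
    qed auto
  qed auto
  then show ?thesis by (rule holomorphic_on_subset) auto
qed

lemma R_holo:
  fixes q w c a :: complex
  assumes q: "norm q < 1"
  shows "(\<lambda>C. \<Sum>m. qpoch (C * c) q m * qpoch (C * a) q m / qpoch q q m * (w / C) ^ m * qpoch_inf (C * q ^ m) q)
           holomorphic_on {C. norm w < norm C}"
proof (rule holo_suminf)
  show "open {C :: complex. norm w < norm C}"
    by (intro open_Collect_less continuous_intros)
  show "(\<lambda>C. qpoch (C * c) q m * qpoch (C * a) q m / qpoch q q m * (w / C) ^ m * qpoch_inf (C * q ^ m) q)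
           holomorphic_on {C. norm w < norm C}" for m
    using qpoch_qq_nonzero[OF q, of m]
    by (intro holomorphic_intros qpoch_inf_holo_comp qpoch_holo_comp q) (auto dest: order.strict_trans1[OF norm_ge_zero])
  fix x :: complex assume x: "x \<in> {C. norm w < norm C}"
  obtain dq where dq: "dq > 0" "\<And>n. dq \<le> norm (qpoch q q n)" using qpoch_qq_lower[OF q] by blast
  define d where "d = (norm x - norm w) / 2"
  define R where "R = norm x + d"
  define r where "r = norm x - d"
  define \<rho> where "\<rho> = norm w / r"
  have d: "d > 0" using x by (simp add: d_def)
  have r1: "r > norm w" using x by (simp add: r_def d_def field_simps)
  have r: "r > norm w" "r > 0" using r1 norm_ge_zero[of w] by linarith+
  have \<rho>: "\<rho> < 1" "\<rho> \<ge> 0" using r by (auto simp: \<rho>_def)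
  define E where "E = exp (R * norm c / (1 - norm q)) * exp (R * norm a / (1 - norm q)) * exp (R / (1 - norm q)) / dq"
  show "\<exists>d>0. cball x d \<subseteq> {C. norm w < norm C} \<and> (\<exists>M. summable M \<and> (\<forall>n. \<forall>y\<in>cball x d.
     norm (qpoch (y * c) q n * qpoch (y * a) q n / qpoch q q n * (w / y) ^ n * qpoch_inf (y * q ^ n) q) \<le> M n))"
  proof (intro exI conjI allI ballI)
    show "d > 0" by (rule d)
    have bnds: "r \<le> norm y \<and> norm y \<le> R" if "y \<in> cball x d" for y
      using that norm_triangle_ineq2[of y x] norm_triangle_ineq2[of x y]
      by (auto simp: dist_norm norm_minus_commute r_def R_def)
    show "cball x d \<subseteq> {C. norm w < norm C}" using bnds r by force
    show "summable (\<lambda>n. E * \<rho> ^ n)" using \<rho> by (intro summable_mult summable_geometric) auto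
    fix n y assume y: "y \<in> cball x d"
    have ry: "r \<le> norm y" "norm y \<le> R" using bnds[OF y] by auto
    have wy: "norm (w / y) \<le> \<rho>"
    proof -
      have "0 < norm y * r" using ry r by (intro mult_pos_pos) auto
      then show ?thesis unfolding \<rho>_def norm_divide using ry r by (intro divide_left_mono) auto
    qed
    have "norm (qpoch (y * c) q n * qpoch (y * a) q n / qpoch q q n * (w / y) ^ n * qpoch_inf (y * q ^ n) q)
        = norm (qpoch (y * c) q n) * norm (qpoch (y * a) q n) * norm (qpoch_inf (y * q ^ n) q) / norm (qpoch q q n) * norm (w / y) ^ n"
      by (simp add: norm_mult norm_divide norm_power)
    also have "\<dots> \<le> exp (R * norm c / (1 - norm q)) * exp (R * norm a / (1 - norm q)) * exp (R / (1 - norm q)) / dq * \<rho> ^ n"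
    proof (intro mult_mono frac_le qpoch_norm_le_R qpoch_inf_norm_le_R q norm_mult_qpow_le power_mono wy dq)
      show "norm (y * c) \<le> R * norm c" using ry by (simp add: norm_mult mult_right_mono)
      show "norm (y * a) \<le> R * norm a" using ry by (simp add: norm_mult mult_right_mono)
    qed (use ry dq \<rho> in auto)
    finally show "norm (qpoch (y * c) q n * qpoch (y * a) q n / qpoch q q n * (w / y) ^ n * qpoch_inf (y * q ^ n) q) \<le> E * \<rho> ^ n"
      by (simp add: E_def)
  qed
qed



lemma neg1_adm:
  fixes q :: complex
  assumes q: "norm q < 1"
  shows "(-1) * q ^ k \<noteq> 1"
proof (cases "k = 0")
  case True then show ?thesis by simp
next
  case False
  then have "norm (q ^ k) < 1" using q by (simp add: norm_power power_less_one_iff)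
  then show ?thesis by (metis mult_minus1 norm_minus_cancel norm_one order.irrefl)
qed

theorem euler_spec:
  fixes q a c :: complex
  assumes q0: "q \<noteq> 0" and q: "norm q < 1" and a0: "a \<noteq> 0" and qa: "norm q < norm a" and a1: "norm a < 1"
    and c0: "c \<noteq> 0" and ac: "norm (a * c / q) < 1"
  shows "suminf (phi q (q / c) (q / a) (-1) (- a * c / q)) =
    qpoch_inf q q / qpoch_inf (- a * c / q) q * suminf (phi q (- c / q) (- a / q) (-1) q)"
proof -
  define A where "A = q / c"
  define B where "B = q / a"
  define z where "z = - a * c / q"
  define f where "f = (\<lambda>n. qpoch A q n * qpoch B q n / qpoch q q n)"
  define Lf where "Lf = (\<lambda>C. \<Sum>n. f n * z ^ n * qpoch_inf (C * q ^ n) q)"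
  define Rs where "Rs = (\<lambda>C. \<Sum>m. qpoch (C * (c / q)) q m * qpoch (C * (a / q)) q m / qpoch q q m * ((- q) / C) ^ m * qpoch_inf (C * q ^ m) q)"
  define Rf where "Rf = (\<lambda>C. qpoch_inf ((- q) / C) q / qpoch_inf z q * Rs C)"
  define S where "S = {C :: complex. norm (- q) < norm C}"
  define U where "U = {C :: complex. norm q < norm C \<and> norm C < min 1 (norm (q / a))}"
  have z: "norm z < 1" using ac by (simp add: z_def norm_divide norm_mult)
  obtain K where K: "\<And>n. norm (f n) \<le> K"
  proof -
    obtain d where d: "d > 0" "\<And>n. d \<le> norm (qpoch q q n)" using qpoch_qq_lower[OF q] by blast
    show ?thesis
    proof (rule that)
      fix n
      have "norm (f n) = norm (qpoch A q n) * norm (qpoch B q n) / norm (qpoch q q n)"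
        by (simp add: f_def norm_mult norm_divide)
      also have "\<dots> \<le> exp (norm A / (1 - norm q)) * exp (norm B / (1 - norm q)) / d"
        by (intro frac_le mult_mono qpoch_norm_le q d) (use d in auto)
      finally show "norm (f n) \<le> exp (norm A / (1 - norm q)) * exp (norm B / (1 - norm q)) / d" .
    qed
  qed
  have holL: "Lf holomorphic_on S" unfolding Lf_def by (rule L_holo[OF q z K])
  have holR: "Rf holomorphic_on S"
  proof -
    have "Rs holomorphic_on S" unfolding Rs_def S_def by (rule R_holo[OF q])
    moreover have "(\<lambda>C. qpoch_inf ((- q) / C) q) holomorphic_on S"
      by (intro qpoch_inf_holo_comp q holomorphic_intros) (auto simp: S_def dest: order.strict_trans1[OF norm_ge_zero])
    moreover have "qpoch_inf z q \<noteq> 0" by (rule qpoch_inf_nonzero[OF q small_all[OF z q]])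
    ultimately show ?thesis unfolding Rf_def by (intro holomorphic_intros)
  qed
  have openS: "open S" unfolding S_def by (intro open_Collect_less continuous_intros)
  have connS: "connected S"
  proof -
    have "S = - cball 0 (norm q)" by (auto simp: S_def)
    then show ?thesis by (simp add: connected_complement_bounded_convex)
  qed
  have openU: "open U" unfolding U_def by (intro open_Collect_conj open_Collect_less continuous_intros)
  have UsubS: "U \<subseteq> S" by (auto simp: U_def S_def)
  have Une: "U \<noteq> {}"
  proof -
    have qlt: "norm q < min 1 (norm (q / a))"
    proof -
      have na: "norm a > 0" using a0 by simp
      have "norm q * norm a < norm q * 1" using a1 q0 by (intro mult_strict_left_mono) auto
      then have "norm q < norm q / norm a" using na by (simp add: field_simps)
      then show ?thesis using q by (simp add: norm_divide)
    qed
    define t where "t = (norm q + min 1 (norm (q / a))) / 2"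
    have t0: "t \<ge> 0" using qlt norm_ge_zero[of q] by (simp add: t_def)
    have nt: "norm (complex_of_real t) = t" using t0 by simp
    have "norm q < t" "t < min 1 (norm (q / a))" using qlt unfolding t_def min_def by (auto split: if_splits)
    then have "complex_of_real t \<in> U" unfolding U_def mem_Collect_eq nt by simp
    then show ?thesis by blast
  qed
  have eqU: "Lf C = Rf C" if C: "C \<in> U" for C
  proof -
    have C1: "norm C < 1" and Cqa: "norm C < norm (q / a)" and Cq: "norm q < norm C" using C by (auto simp: U_def)
    have C0: "C \<noteq> 0" using Cq by auto
    have Cadm: "\<And>k. C * q ^ k \<noteq> 1" by (rule small_all[OF C1 q])
    have Bn: "norm B < 1" using qa a0 by (simp add: B_def norm_divide)
    have B0: "B \<noteq> 0" using q0 a0 by (simp add: B_def)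
    have z0: "z \<noteq> 0" using q0 a0 c0 by (simp add: z_def)
    have A0: "A \<noteq> 0" using q0 c0 by (simp add: A_def)
    have CB: "norm (C / B) < 1" using Cqa a0 q0 by (simp add: B_def norm_divide norm_mult field_simps)
    have ABz: "A * B * z / C = (- q) / C" using a0 c0 q0 by (simp add: A_def B_def z_def field_simps)
    have w: "norm (A * B * z / C) < 1" unfolding ABz using Cq C0 by (simp add: norm_divide divide_less_eq)
    have Az: "\<And>k. A * z * q ^ k \<noteq> 1"
    proof -
      have "A * z = - a" using q0 c0 by (simp add: A_def z_def)
      moreover have "norm (- a) < 1" using a1 by simp
      ultimately show "\<And>k. A * z * q ^ k \<noteq> 1" using small_all[of "- a" q] q by simp
    qed
    have eu: "suminf (phi q A B C z) = qpoch_inf (A * B * z / C) q / qpoch_inf z q * suminf (phi q (C / A) (C / B) C (A * B * z / C))"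
      by (rule euler[OF q Bn B0 z z0 A0 CB C0 w Cadm Az])
    have "Lf C = qpoch_inf C q * suminf (phi q A B C z)"
      unfolding Lf_def f_def by (rule phi_times_inf[OF q z Cadm, symmetric])
    also have "\<dots> = qpoch_inf (A * B * z / C) q / qpoch_inf z q * (qpoch_inf C q * suminf (phi q (C / A) (C / B) C (A * B * z / C)))"
      unfolding eu by (simp add: mult_ac)
    also have "qpoch_inf C q * suminf (phi q (C / A) (C / B) C (A * B * z / C)) = Rs C"
    proof -
      have "C / A = C * (c / q)" "C / B = C * (a / q)" by (simp_all add: A_def B_def)
      then show ?thesis unfolding Rs_def ABz by (subst phi_times_inf[OF q _ Cadm]) (use w[unfolded ABz] in auto)
    qed
    finally show ?thesis unfolding Rf_def ABz .
  qed
  have m1: "- 1 \<in> S" using q by (simp add: S_def)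
  have LR: "Lf (- 1) = Rf (- 1)"
    by (rule analytic_continuation_open[OF openU openS Une connS UsubS holL holR eqU m1])
  have adm: "\<And>k. (- 1) * q ^ k \<noteq> 1" by (rule neg1_adm[OF q])
  have L1: "Lf (- 1) = qpoch_inf (- 1) q * suminf (phi q A B (- 1) z)"
    unfolding Lf_def f_def by (rule phi_times_inf[OF q z adm, symmetric])
  have R1: "Rs (- 1) = qpoch_inf (- 1) q * suminf (phi q (- c / q) (- a / q) (- 1) q)"
    unfolding Rs_def by (subst phi_times_inf[OF q q adm]) simp
  have nz: "qpoch_inf (- 1) q \<noteq> 0" by (rule qpoch_inf_nonzero[OF q adm])
  have "qpoch_inf (- 1) q * suminf (phi q A B (- 1) z) = qpoch_inf (- 1) q * (qpoch_inf q q / qpoch_inf z q * suminf (phi q (- c / q) (- a / q) (- 1) q))"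
    using LR unfolding L1 Rf_def R1 by (simp add: mult_ac)
  then have "suminf (phi q A B (- 1) z) = qpoch_inf q q / qpoch_inf z q * suminf (phi q (- c / q) (- a / q) (- 1) q)"
    by (rule mult_left_cancel[THEN iffD1, OF nz])
  then show ?thesis unfolding A_def B_def z_def .
qed



lemma S_sum_m1: "S_sum q (-1) = 0"
  by (simp add: S_sum_def)

lemma S_sum_0: "S_sum q 0 = 1"
  by (simp add: S_sum_def)

lemma S_sum_Suc:
  fixes q :: complex
  assumes q0: "q \<noteq> 0"
  shows "S_sum q (int (Suc m)) = S_sum q (int m) + 2 * (-1) ^ Suc m / q ^ (Suc m * Suc m)"
proof -
  define k where "k = int (Suc m)"
  have iv: "{-k..k} = insert (-k) (insert k {-(k-1)..k-1})" by (auto simp: k_def)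
  have fin: "finite {-(k-1)..k-1}" by simp
  have nk: "-k \<notin> insert k {-(k-1)..k-1}" "k \<notin> {-(k-1)..k-1}" by (auto simp: k_def)
  have e1: "(-1 :: complex) powi (-k) = (-1) ^ Suc m"
  proof -
    have "(-1 :: complex) powi (-k) = inverse ((-1) ^ Suc m)"
      unfolding k_def by (simp only: power_int_minus power_int_of_nat)
    also have "\<dots> = (-1) ^ Suc m" by (metis power_inverse inverse_minus_eq inverse_1)
    finally show ?thesis .
  qed
  have e2: "(-1 :: complex) powi k = (-1) ^ Suc m" unfolding k_def by (simp only: power_int_of_nat)
  have sq: "(-k)^2 = int (Suc m * Suc m)" "k^2 = int (Suc m * Suc m)"
    by (simp_all only: k_def power2_eq_square of_nat_mult minus_mult_minus)
  have e3: "q powi (-((-k)^2)) = 1 / q ^ (Suc m * Suc m)"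
    unfolding sq by (simp only: power_int_minus power_int_of_nat divide_inverse mult_1)
  have e4: "q powi (-(k^2)) = 1 / q ^ (Suc m * Suc m)"
    unfolding sq by (simp only: power_int_minus power_int_of_nat divide_inverse mult_1)
  have "S_sum q k = (-1) powi (-k) * q powi (-((-k)^2)) + ((-1) powi k * q powi (-(k^2)) + S_sum q (k - 1))"
    unfolding S_sum_def iv using fin nk by (simp add: sum.insert)
  also have "S_sum q (k - 1) = S_sum q (int m)" by (simp add: k_def)
  finally have X: "S_sum q k = (-1) powi (-k) * q powi (-((-k)^2)) + ((-1) powi k * q powi (-(k^2)) + S_sum q (int m))" .
  have "S_sum q k = (-1) ^ Suc m * (1 / q ^ (Suc m * Suc m)) + ((-1) ^ Suc m * (1 / q ^ (Suc m * Suc m)) + S_sum q (int m))"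
    using X unfolding e1 e2 e3 e4 .
  then show ?thesis unfolding k_def by (simp add: field_simps)
qed


definition EE :: "complex \<Rightarrow> nat \<Rightarrow> complex" where
  "EE q N = (\<Sum>a\<le>N. (-1) ^ a / (qpoch q q a * qpoch q q (N - a)))"

lemma qpoch_q_Suc: "qpoch q q (Suc n) = qpoch q q n * (1 - q ^ Suc n)"
  by (simp add: qpoch_Suc)

lemma EE_sumA:
  fixes q :: complex
  assumes q: "norm q < 1"
  shows "(\<Sum>a\<le>Suc L. (-1) ^ a * (1 - q ^ a) / (qpoch q q a * qpoch q q (Suc L - a))) = - EE q L"
proof -
  have "(\<Sum>a\<le>Suc L. (-1) ^ a * (1 - q ^ a) / (qpoch q q a * qpoch q q (Suc L - a)))
     = (\<Sum>b\<le>L. (-1) ^ Suc b * (1 - q ^ Suc b) / (qpoch q q (Suc b) * qpoch q q (Suc L - Suc b)))"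
    by (subst sum.atMost_Suc_shift) simp
  also have "\<dots> = (\<Sum>b\<le>L. - ((-1) ^ b / (qpoch q q b * qpoch q q (L - b))))"
  proof (rule sum.cong)
    fix b assume "b \<in> {..L}"
    have "1 - q ^ Suc b \<noteq> 0" using qq_nonzero[OF q, of b] by simp
    then show "(-1) ^ Suc b * (1 - q ^ Suc b) / (qpoch q q (Suc b) * qpoch q q (Suc L - Suc b)) = - ((-1) ^ b / (qpoch q q b * qpoch q q (L - b)))"
      using qpoch_qq_nonzero[OF q, of b] qpoch_qq_nonzero[OF q, of "L - b"]
      by (simp add: qpoch_q_Suc field_simps)
  qed simp
  also have "\<dots> = - EE q L" by (simp add: EE_def sum_negf)
  finally show ?thesis .
qed

lemma EE_sumB:
  fixes q :: complex
  assumes q: "norm q < 1"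
  shows "(\<Sum>a\<le>Suc L. (-1) ^ a * q ^ a * (1 - q ^ (Suc L - a)) / (qpoch q q a * qpoch q q (Suc L - a)))
      = (\<Sum>a\<le>L. (-1) ^ a * q ^ a / (qpoch q q a * qpoch q q (L - a)))"
proof -
  have "(\<Sum>a\<le>Suc L. (-1) ^ a * q ^ a * (1 - q ^ (Suc L - a)) / (qpoch q q a * qpoch q q (Suc L - a)))
     = (\<Sum>a\<le>L. (-1) ^ a * q ^ a * (1 - q ^ (Suc L - a)) / (qpoch q q a * qpoch q q (Suc L - a)))"
    by (subst sum.atMost_Suc) simp
  also have "\<dots> = (\<Sum>a\<le>L. (-1) ^ a * q ^ a / (qpoch q q a * qpoch q q (L - a)))"
  proof (rule sum.cong)
    fix a assume "a \<in> {..L}"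
    then have e: "Suc L - a = Suc (L - a)" by auto
    have "1 - q ^ Suc (L - a) \<noteq> 0" using qq_nonzero[OF q, of "L - a"] by simp
    then show "(-1) ^ a * q ^ a * (1 - q ^ (Suc L - a)) / (qpoch q q a * qpoch q q (Suc L - a)) = (-1) ^ a * q ^ a / (qpoch q q a * qpoch q q (L - a))"
      unfolding e using qpoch_qq_nonzero[OF q, of a] qpoch_qq_nonzero[OF q, of "L - a"]
      by (simp add: qpoch_q_Suc field_simps)
  qed simp
  finally show ?thesis .
qed

lemma FF_eq:
  fixes q :: complex
  assumes q: "norm q < 1"
  shows "(\<Sum>a\<le>Suc L. (-1) ^ a * q ^ a / (qpoch q q a * qpoch q q (Suc L - a))) = EE q (Suc L) + EE q L"
proof -
  have "(\<Sum>a\<le>Suc L. (-1) ^ a * q ^ a / (qpoch q q a * qpoch q q (Suc L - a)))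
    = (\<Sum>a\<le>Suc L. (-1) ^ a / (qpoch q q a * qpoch q q (Suc L - a)) - (-1) ^ a * (1 - q ^ a) / (qpoch q q a * qpoch q q (Suc L - a)))"
    by (rule sum.cong) (simp_all add: diff_divide_distrib[symmetric] algebra_simps)
  also have "\<dots> = EE q (Suc L) + EE q L"
    unfolding sum_subtractf EE_sumA[OF q] by (simp add: EE_def)
  finally show ?thesis .
qed

lemma EE_rec:
  fixes q :: complex
  assumes q: "norm q < 1"
  shows "(1 - q ^ Suc (Suc L)) * EE q (Suc (Suc L)) = EE q L"
proof -
  define M where "M = Suc (Suc L)"
  have "(1 - q ^ M) * EE q M = (\<Sum>a\<le>M. (-1) ^ a * (1 - q ^ a) / (qpoch q q a * qpoch q q (M - a))
        + (-1) ^ a * q ^ a * (1 - q ^ (M - a)) / (qpoch q q a * qpoch q q (M - a)))"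
    unfolding EE_def sum_distrib_left
  proof (rule sum.cong)
    fix a assume "a \<in> {..M}"
    then have qa: "q ^ a * q ^ (M - a) = q ^ M" by (simp add: power_add[symmetric])
    have "(-1) ^ a * (1 - q ^ a) + (-1) ^ a * q ^ a * (1 - q ^ (M - a)) = (-1) ^ a * (1 - q ^ a * q ^ (M - a))"
      by (simp add: algebra_simps)
    then have num: "(-1) ^ a * (1 - q ^ a) + (-1) ^ a * q ^ a * (1 - q ^ (M - a)) = (1 - q ^ M) * (-1) ^ a"
      unfolding qa by simp
    show "(1 - q ^ M) * ((-1) ^ a / (qpoch q q a * qpoch q q (M - a))) =
      (-1) ^ a * (1 - q ^ a) / (qpoch q q a * qpoch q q (M - a)) + (-1) ^ a * q ^ a * (1 - q ^ (M - a)) / (qpoch q q a * qpoch q q (M - a))"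
      unfolding add_divide_distrib[symmetric] num by simp
  qed simp
  also have "\<dots> = - EE q (Suc L) + (EE q (Suc L) + EE q L)"
    unfolding sum.distrib M_def EE_sumA[OF q] EE_sumB[OF q] FF_eq[OF q] ..
  finally show ?thesis by (simp add: M_def)
qed

lemma EE_0: "EE q 0 = 1" by (simp add: EE_def)

lemma EE_1: "EE q 1 = 0" by (simp add: EE_def)

lemma EE_even:
  fixes q :: complex
  assumes q: "norm q < 1"
  shows "EE q (2 * n) * (\<Prod>k<n. 1 - q ^ (2 * k + 2)) = 1"
proof (induction n)
  case 0 then show ?case by (simp add: EE_0)
next
  case (Suc n)
  have "2 * Suc n = Suc (Suc (2 * n))" by simp
  then have "EE q (2 * Suc n) * (1 - q ^ (2 * n + 2)) = EE q (2 * n)"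
    using EE_rec[OF q, of "2 * n"] by (simp add: mult.commute)
  then have rec: "EE q (2 * Suc n) * (1 - q ^ (2 * n + 2)) = EE q (2 * n)" .
  define P where "P = (\<Prod>k<n. 1 - q ^ (2 * k + 2))"
  have "(\<Prod>k<Suc n. 1 - q ^ (2 * k + 2)) = P * (1 - q ^ (2 * n + 2))"
    unfolding P_def by (rule prod.lessThan_Suc)
  then have "EE q (2 * Suc n) * (\<Prod>k<Suc n. 1 - q ^ (2 * k + 2)) = (EE q (2 * Suc n) * (1 - q ^ (2 * n + 2))) * P"
    by (simp only: mult_ac)
  also have "\<dots> = 1" unfolding rec P_def by (rule Suc.IH)
  finally show ?case .
qed


definition cc :: "complex \<Rightarrow> nat \<Rightarrow> nat \<Rightarrow> complex" where
  "cc q n r = 1 / (qpoch q q (n - r) * qpoch q q (n + r))"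

definition alpha :: "complex \<Rightarrow> nat \<Rightarrow> complex" where
  "alpha q r = q ^ (r * r - r) * (1 + q ^ r) * (q ^ r * S_sum q (int r) - S_sum q (int r - 1))"

definition DD :: "complex \<Rightarrow> nat \<Rightarrow> nat \<Rightarrow> complex" where
  "DD q n r = (if r = 0 \<or> n < r then 0 else
      - S_sum q (int r - 1) * q ^ (r * r - r) / (qpoch q q (n - r) * qpoch q q (n + r - 1)))"

lemma alg_gen:
  fixes W X Yp S Sr Pm Qm sg u v :: complex
  assumes nz: "W \<noteq> 0" "X \<noteq> 0" "Pm \<noteq> 0" "Qm \<noteq> 0" "u \<noteq> 0" "v \<noteq> 0"
    and Sr: "Sr * (W * X) = S * (W * X) + 2 * sg" and hu: "u = 1 - Yp" and hv: "v = 1 - Yp * X * X"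
  shows "W * (1 + X) * (X * Sr - S) * (1 / (Pm * u * (Qm * v)))
    = (1 + Yp * X) * (2 * sg * (1 / (Pm * u * (Qm * v))))
      + ((- S * W / (Pm * u * Qm)) - (- Sr * (W * X * X) / (Pm * (Qm * v))))"
proof -
  have num: "W * (1 + X) * (X * Sr - S) - (1 + Yp * X) * (2 * sg) + S * W * v - Sr * (W * X * X) * u
      = (Sr * (W * X) - S * (W * X) - 2 * sg) * (1 + X * Yp)"
    unfolding hu hv by (simp add: algebra_simps)
  have "W * (1 + X) * (X * Sr - S) * (1 / (Pm * u * (Qm * v))) - ((1 + Yp * X) * (2 * sg * (1 / (Pm * u * (Qm * v))))
      + ((- S * W / (Pm * u * Qm)) - (- Sr * (W * X * X) / (Pm * (Qm * v)))))
    = (W * (1 + X) * (X * Sr - S) - (1 + Yp * X) * (2 * sg) + S * W * v - Sr * (W * X * X) * u) / (Pm * u * (Qm * v))"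
    using nz by (simp add: field_simps)
  also have "\<dots> = 0" unfolding num Sr by simp
  finally show ?thesis by simp
qed

lemma alg_last:
  fixes W X S Sr Qm sg v :: complex
  assumes nz: "W \<noteq> 0" "X \<noteq> 0" "Qm \<noteq> 0" "v \<noteq> 0"
    and Sr: "Sr * (W * X) = S * (W * X) + 2 * sg" and hv: "v = 1 - X * X"
  shows "W * (1 + X) * (X * Sr - S) * (1 / (1 * (Qm * v)))
    = (1 + X) * (2 * sg * (1 / (1 * (Qm * v)))) + ((- S * W / (1 * Qm)) - 0)"
proof -
  have num: "W * (1 + X) * (X * Sr - S) - (1 + X) * (2 * sg) + S * W * v
      = (Sr * (W * X) - S * (W * X) - 2 * sg) * (1 + X)"
    unfolding hv by (simp add: algebra_simps)
  have "W * (1 + X) * (X * Sr - S) * (1 / (1 * (Qm * v))) - ((1 + X) * (2 * sg * (1 / (1 * (Qm * v)))) + ((- S * W / (1 * Qm)) - 0))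
    = (W * (1 + X) * (X * Sr - S) - (1 + X) * (2 * sg) + S * W * v) / (Qm * v)"
    using nz by (simp add: field_simps)
  also have "\<dots> = 0" unfolding num Sr by simp
  finally show ?thesis by simp
qed

lemma alg_first:
  fixes Y Pm u :: complex
  assumes nz: "Pm \<noteq> 0" "u \<noteq> 0" and hu: "u = 1 - Y"
  shows "2 * (1 / ((Pm * u) * (Pm * u))) = (1 + Y) * (1 * 1 * (1 / ((Pm * u) * (Pm * u)))) + (0 - (- 1 * 1 / (Pm * (Pm * u))))"
proof -
  have "2 * (1 / ((Pm * u) * (Pm * u))) - ((1 + Y) * (1 * 1 * (1 / ((Pm * u) * (Pm * u)))) + (0 - (- 1 * 1 / (Pm * (Pm * u)))))
      = (2 - (1 + Y) - u) / (Pm * u * (Pm * u))"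
    using nz by (simp add: field_simps)
  also have "\<dots> = 0" unfolding hu by simp
  finally show ?thesis by simp
qed


lemma sq_sub: "r * r - r + r = r * (r :: nat)"
  using le_square[of r] by simp

lemma sq_suc_sub: "Suc r * Suc r - Suc r = (r * r - r) + r + r"
proof -
  have "Suc r * Suc r - Suc r = r * r + r" by simp
  then show ?thesis using sq_sub[of r] by simp
qed

lemma bp_term:
  fixes q :: complex
  assumes q0: "q \<noteq> 0" and q: "norm q < 1" and n: "1 \<le> n" and r: "r \<le> n"
  shows "alpha q r * cc q n r = (1 + q ^ n) * ((if r = 0 then 1 else 2) * (-1) ^ r * cc q n r) + (DD q n r - DD q n (Suc r))"
proof -
  have qnz: "qpoch q q k \<noteq> 0" for k by (rule qpoch_qq_nonzero[OF q])
  have unz: "1 - q ^ Suc k \<noteq> 0" for k using qq_nonzero[OF q, of k] by simp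
  consider (zero) "r = 0" | (last) "r = n" "r \<noteq> 0" | (mid) "0 < r" "r < n" using r by linarith
  then show ?thesis
  proof cases
    case zero
    obtain m where m: "n = Suc m" using n by (cases n) auto
    define Pm where "Pm = qpoch q q m"
    define u where "u = 1 - q ^ n"
    have pn: "qpoch q q n = Pm * u" by (simp add: m Pm_def u_def qpoch_q_Suc)
    have a0: "alpha q 0 = 2" by (simp add: alpha_def S_sum_0 S_sum_m1)
    have c0: "cc q n 0 = 1 / ((Pm * u) * (Pm * u))" by (simp add: cc_def pn)
    have d0: "DD q n 0 = 0" by (simp add: DD_def)
    have d1: "DD q n (Suc 0) = - 1 * 1 / (Pm * (Pm * u))"
      using n by (simp add: DD_def S_sum_0 m Pm_def u_def qpoch_q_Suc)
    have "2 * (1 / ((Pm * u) * (Pm * u))) = (1 + q ^ n) * (1 * 1 * (1 / ((Pm * u) * (Pm * u)))) + (0 - (- 1 * 1 / (Pm * (Pm * u))))"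
      by (rule alg_first) (use qq_nonzero[OF q, of m] in \<open>auto simp: Pm_def u_def m qnz\<close>)
    then show ?thesis unfolding zero a0 c0 d0 d1 by simp
  next
    case last
    obtain m where m: "n = Suc m" using n by (cases n) auto
    define W where "W = q ^ (n * n - n)"
    define X where "X = q ^ n"
    define S where "S = S_sum q (int n - 1)"
    define Sr where "Sr = S_sum q (int n)"
    define Qm where "Qm = qpoch q q (n + n - 1)"
    define v where "v = 1 - X * X"
    have WX: "W * X = q ^ (n * n)" unfolding W_def X_def power_add[symmetric] sq_sub ..
    have Srel: "Sr * (W * X) = S * (W * X) + 2 * (-1) ^ n"
    proof -
      have "Sr = S + 2 * (-1) ^ n / q ^ (n * n)" using S_sum_Suc[OF q0, of m] by (simp add: Sr_def S_def m)
      then show ?thesis unfolding WX using q0 by (simp add: field_simps)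
    qed
    have p2n: "qpoch q q (n + n) = Qm * v"
    proof -
      have "n + n = Suc (n + n - 1)" using n by simp
      then have "qpoch q q (n + n) = qpoch q q (n + n - 1) * (1 - q ^ Suc (n + n - 1))"
        by (metis qpoch_q_Suc)
      also have "Suc (n + n - 1) = n + n" using n by simp
      finally show ?thesis by (simp add: Qm_def v_def X_def power_add)
    qed
    have al: "alpha q n = W * (1 + X) * (X * Sr - S)" by (simp add: alpha_def W_def X_def Sr_def S_def)
    have c: "cc q n n = 1 / (1 * (Qm * v))" by (simp add: cc_def p2n)
    have dn: "DD q n n = - S * W / (1 * Qm)" using last by (simp add: DD_def S_def W_def Qm_def)
    have dn1: "DD q n (Suc n) = 0" by (simp add: DD_def)
    have vnz: "v \<noteq> 0" using unz[of "n + n - 1"] n by (simp add: v_def X_def power_add[symmetric])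
    have "W * (1 + X) * (X * Sr - S) * (1 / (1 * (Qm * v))) = (1 + X) * (2 * (-1) ^ n * (1 / (1 * (Qm * v)))) + ((- S * W / (1 * Qm)) - 0)"
      by (rule alg_last[OF _ _ _ vnz Srel]) (auto simp: W_def X_def Qm_def qnz q0 v_def)
    then show ?thesis unfolding last(1) al c dn dn1 using last by (simp add: X_def mult_ac)
  next
    case mid
    define W where "W = q ^ (r * r - r)"
    define X where "X = q ^ r"
    define Yp where "Yp = q ^ (n - r)"
    define S where "S = S_sum q (int r - 1)"
    define Sr where "Sr = S_sum q (int r)"
    define Pm where "Pm = qpoch q q (n - r - 1)"
    define u where "u = 1 - Yp"
    define Qm where "Qm = qpoch q q (n + r - 1)"
    define v where "v = 1 - Yp * X * X"
    obtain m where m: "r = Suc m" using mid by (cases r) auto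
    have WX: "W * X = q ^ (r * r)" unfolding W_def X_def power_add[symmetric] sq_sub ..
    have Srel: "Sr * (W * X) = S * (W * X) + 2 * (-1) ^ r"
    proof -
      have "Sr = S + 2 * (-1) ^ r / q ^ (r * r)" using S_sum_Suc[OF q0, of m] by (simp add: Sr_def S_def m)
      then show ?thesis unfolding WX using q0 by (simp add: field_simps)
    qed
    have pnr: "qpoch q q (n - r) = Pm * u"
    proof -
      have e: "n - r = Suc (n - r - 1)" using mid by simp
      show ?thesis unfolding Pm_def u_def Yp_def by (subst e, subst qpoch_q_Suc, subst e[symmetric]) simp
    qed
    have qnr: "q ^ (n + r) = Yp * X * X"
    proof -
      have "n + r = (n - r) + r + r" using mid by simp
      then show ?thesis unfolding Yp_def X_def by (simp only: power_add)
    qed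
    have pnr2: "qpoch q q (n + r) = Qm * v"
    proof -
      have e: "n + r = Suc (n + r - 1)" using mid by simp
      show ?thesis unfolding Qm_def v_def qnr[symmetric] by (subst e, subst qpoch_q_Suc, subst e[symmetric]) simp
    qed
    have qn: "q ^ n = Yp * X"
    proof -
      have "n = (n - r) + r" using mid by simp
      then show ?thesis unfolding Yp_def X_def by (metis power_add)
    qed
    have al: "alpha q r = W * (1 + X) * (X * Sr - S)" by (simp add: alpha_def W_def X_def Sr_def S_def)
    have c: "cc q n r = 1 / (Pm * u * (Qm * v))" by (simp add: cc_def pnr pnr2 mult_ac)
    have dr: "DD q n r = - S * W / (Pm * u * Qm)" using mid by (simp add: DD_def S_def W_def Qm_def pnr)
    have dr1: "DD q n (Suc r) = - Sr * (W * X * X) / (Pm * (Qm * v))"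
    proof -
      have "q ^ (Suc r * Suc r - Suc r) = W * X * X" unfolding sq_suc_sub W_def X_def by (simp only: power_add)
      moreover have "n - Suc r = n - r - 1" "n + Suc r - 1 = n + r" by auto
      ultimately show ?thesis using mid by (simp add: DD_def Sr_def Pm_def pnr2 mult_ac)
    qed
    have unz2: "u \<noteq> 0"
    proof -
      have e: "n - r = Suc (n - r - 1)" using mid by simp
      show ?thesis unfolding u_def Yp_def by (subst e) (rule unz)
    qed
    have vnz: "v \<noteq> 0" using unz[of "n + r - 1"] mid by (simp add: v_def qnr[symmetric])
    have "W * (1 + X) * (X * Sr - S) * (1 / (Pm * u * (Qm * v)))
      = (1 + Yp * X) * (2 * (-1) ^ r * (1 / (Pm * u * (Qm * v))))
      + ((- S * W / (Pm * u * Qm)) - (- Sr * (W * X * X) / (Pm * (Qm * v))))"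
      by (rule alg_gen[OF _ _ _ _ unz2 vnz Srel u_def v_def]) (auto simp: W_def X_def Pm_def Qm_def qnz q0)
    then show ?thesis unfolding al c dr dr1 qn using mid by (simp add: mult_ac)
  qed
qed


lemma neg1_pow_diff: "r \<le> n \<Longrightarrow> (-1 :: complex) ^ (n - r) = (-1) ^ n * (-1) ^ r"
proof -
  assume "r \<le> n"
  then have "(-1 :: complex) ^ n = (-1) ^ (n - r) * (-1) ^ r" by (simp add: power_add[symmetric])
  then have "(-1 :: complex) ^ n * (-1) ^ r = (-1) ^ (n - r) * ((-1) ^ r * (-1) ^ r)" by (simp add: mult_ac)
  also have "(-1 :: complex) ^ r * (-1) ^ r = 1" by (simp add: power_add[symmetric] flip: mult_2)
  finally show ?thesis by simp
qed

lemma HH_EE: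
  fixes q :: complex
  shows "EE q (2 * n) = (-1) ^ n * (\<Sum>r\<le>n. (if r = 0 then 1 else 2) * (-1) ^ r * cc q n r)"
proof -
  define w where "w = (\<lambda>a. (-1 :: complex) ^ a / (qpoch q q a * qpoch q q (2 * n - a)))"
  define t where "t = (\<lambda>r. (-1 :: complex) ^ r * cc q n r)"
  have "EE q (2 * n) = sum w {0..2 * n}" by (simp add: EE_def w_def atLeast0AtMost)
  also have "{0..2 * n} = {0..<n} \<union> {n..2 * n}" by auto
  also have "sum w ({0..<n} \<union> {n..2 * n}) = sum w {0..<n} + sum w {n..2 * n}"
    by (rule sum.union_disjoint) auto
  also have "sum w {n..2 * n} = sum (\<lambda>r. w (r + n)) {0..n}"
    using sum.shift_bounds_cl_nat_ivl[of w 0 n n] by (simp add: mult_2)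
  also have "\<dots> = sum (\<lambda>r. (-1) ^ n * t r) {0..n}"
  proof (rule sum.cong)
    fix r assume "r \<in> {0..n}"
    then have "2 * n - (r + n) = n - r" "r + n = n + r" by auto
    then show "w (r + n) = (-1) ^ n * t r"
      by (simp add: w_def t_def cc_def power_add mult_ac add.commute)
  qed simp
  also have "sum w {0..<n} = sum (\<lambda>r. w (n - r)) {1..n}"
    by (rule sum.reindex_bij_witness[where i="\<lambda>a. n - a" and j="\<lambda>r. n - r"]) auto
  also have "\<dots> = sum (\<lambda>r. (-1) ^ n * t r) {1..n}"
  proof (rule sum.cong)
    fix r assume r: "r \<in> {1..n}"
    then have "2 * n - (n - r) = n + r" by auto
    then show "w (n - r) = (-1) ^ n * t r"
      using r by (simp add: w_def t_def cc_def neg1_pow_diff mult_ac)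
  qed simp
  also have "(\<Sum>r\<le>n. (if r = 0 then 1 else 2) * (-1) ^ r * cc q n r) = sum t {0..n} + sum t {1..n}"
  proof -
    have "(\<Sum>r\<le>n. (if r = 0 then 1 else 2) * (-1) ^ r * cc q n r) = (\<Sum>r\<in>{0..n}. t r + (if r = 0 then 0 else t r))"
      by (rule sum.cong) (auto simp: t_def atLeast0AtMost)
    also have "\<dots> = sum t {0..n} + (\<Sum>r\<in>{0..n}. (if r = 0 then 0 else t r))" by (rule sum.distrib)
    also have "(\<Sum>r\<in>{0..n}. (if r = 0 then 0 else t r)) = sum t {1..n}"
      by (subst sum.atLeast_Suc_atMost) (auto intro!: sum.cong)
    finally show ?thesis .
  qed
  ultimately show ?thesis by (simp add: sum_distrib_right[symmetric] algebra_simps)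
qed

lemma qpoch_m1_prod:
  fixes q :: complex
  shows "qpoch q q n * qpoch (-1) q n * (1 + q ^ n) = 2 * (\<Prod>k<n. 1 - q ^ (2 * k + 2))"
proof (induction n)
  case 0 then show ?case by simp
next
  case (Suc n)
  have e: "(1 - q ^ Suc n) * (1 + q ^ Suc n) = 1 - q ^ (2 * n + 2)"
  proof -
    have ee: "Suc n + Suc n = 2 * n + 2" by simp
    have f: "q ^ Suc n * q ^ Suc n = q ^ (2 * n + 2)" by (metis ee power_add)
    have a1: "(1 - q ^ Suc n) * (1 + q ^ Suc n) = 1 - q ^ Suc n * q ^ Suc n" by (simp add: algebra_simps)
    show ?thesis by (simp only: a1 f)
  qed
  have "qpoch q q (Suc n) * qpoch (-1) q (Suc n) * (1 + q ^ Suc n) =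
     (qpoch q q n * qpoch (-1) q n * (1 + q ^ n)) * ((1 - q ^ Suc n) * (1 + q ^ Suc n))"
    by (simp add: qpoch_Suc mult_ac)
  also note e
  finally have "qpoch q q (Suc n) * qpoch (-1) q (Suc n) * (1 + q ^ Suc n) =
     (qpoch q q n * qpoch (-1) q n * (1 + q ^ n)) * (1 - q ^ (2 * n + 2))" .
  then show ?case using Suc by simp
qed

theorem bailey_pair:
  fixes q :: complex
  assumes q0: "q \<noteq> 0" and q: "norm q < 1"
  shows "(\<Sum>r\<le>n. alpha q r * cc q n r) = 2 * (-1) ^ n / (qpoch q q n * qpoch (-1) q n)"
proof (cases "n = 0")
  case True
  then show ?thesis by (simp add: alpha_def cc_def S_sum_0 S_sum_m1)
next
  case False
  then have n: "1 \<le> n" by simp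
  have "(\<Sum>r\<le>n. alpha q r * cc q n r) = (\<Sum>r\<le>n. (1 + q ^ n) * ((if r = 0 then 1 else 2) * (-1) ^ r * cc q n r) + (DD q n r - DD q n (Suc r)))"
    by (rule sum.cong[OF refl], rule bp_term[OF q0 q n], simp)
  also have "\<dots> = (1 + q ^ n) * (\<Sum>r\<le>n. (if r = 0 then 1 else 2) * (-1) ^ r * cc q n r) + (DD q n 0 - DD q n (Suc n))"
    by (simp add: sum.distrib sum_distrib_left sum_telescope)
  also have "DD q n 0 - DD q n (Suc n) = 0" by (simp add: DD_def)
  also have "(\<Sum>r\<le>n. (if r = 0 then 1 else 2) * (-1) ^ r * cc q n r) = (-1) ^ n * EE q (2 * n)"
    unfolding HH_EE by (simp add: mult.assoc[symmetric] flip: power_add mult_2)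
  finally have X: "(\<Sum>r\<le>n. alpha q r * cc q n r) = (1 + q ^ n) * ((-1) ^ n * EE q (2 * n))" by simp
  define Pr where "Pr = (\<Prod>k<n. 1 - q ^ (2 * k + 2))"
  have P: "EE q (2 * n) * Pr = 1" unfolding Pr_def by (rule EE_even[OF q])
  have Q: "qpoch q q n * qpoch (-1) q n * (1 + q ^ n) = 2 * Pr" unfolding Pr_def by (rule qpoch_m1_prod)
  have nz1: "1 + q ^ n \<noteq> 0"
  proof
    assume "1 + q ^ n = 0"
    then have "norm (q ^ n) = 1" by (simp add: add_eq_0_iff)
    moreover have "norm (q ^ n) < 1" using q n by (simp add: norm_power power_less_one_iff)
    ultimately show False by simp
  qed
  have Pr0: "Pr \<noteq> 0" using P by auto
  have EEv: "EE q (2 * n) = 1 / Pr" using P Pr0 by (simp add: eq_divide_eq)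
  have Qv: "qpoch q q n * qpoch (-1) q n = 2 * Pr / (1 + q ^ n)" using Q nz1 by (simp add: eq_divide_eq)
  show ?thesis unfolding X EEv Qv using nz1 Pr0 by (simp add: field_simps)
qed



lemma S_bound:
  fixes q :: complex
  assumes q0: "q \<noteq> 0" and q1: "norm q \<le> 1" and N: "m * m \<le> N"
  shows "norm (q ^ N * S_sum q (int m)) \<le> 2 * real m + 1"
proof -
  have "norm (q ^ N * S_sum q (int m)) = norm (\<Sum>j\<in>{- int m..int m}. (-1) powi j * (q ^ N * q powi (- (j^2))))"
    unfolding S_sum_def sum_distrib_left by (simp add: mult_ac)
  also have "\<dots> \<le> (\<Sum>j\<in>{- int m..int m}. norm ((-1) powi j * (q ^ N * q powi (- (j^2)))))"
    by (rule norm_sum)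
  also have "\<dots> \<le> (\<Sum>j\<in>{- int m..int m}. 1)"
  proof (rule sum_mono)
    fix j assume j: "j \<in> {- int m..int m}"
    have "0 \<le> (int m - j) * (int m + j)" using j by (intro mult_nonneg_nonneg) auto
    then have jm: "j^2 \<le> int (m * m)" by (simp add: power2_eq_square algebra_simps)
    have nq: "norm q \<noteq> 0" using q0 by simp
    have "norm ((-1) powi j * (q ^ N * q powi (- (j^2)))) = norm q powi (int N) * norm q powi (- (j^2))"
      by (simp add: norm_mult norm_power_int norm_power power_int_of_nat)
    also have "\<dots> = norm q powi (int N - j^2)"
      using power_int_add[of "norm q" "int N" "- (j^2)"] nq by simp
    also have "\<dots> \<le> 1"
    proof -
      have "int (m * m) \<le> int N" using N by (simp only: of_nat_le_iff)
      then have jN: "j^2 \<le> int N" by (rule order.trans[OF jm])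
      show ?thesis using jN q1 by (intro power_int_le_one) auto
    qed
    finally show "norm ((-1) powi j * (q ^ N * q powi (- (j^2)))) \<le> 1" .
  qed
  also have "\<dots> = 2 * real m + 1" by simp
  finally show ?thesis .
qed

lemma alpha_bound:
  fixes q :: complex
  assumes q0: "q \<noteq> 0" and q: "norm q < 1"
  shows "norm (alpha q r) \<le> 8 * (real r + 1)"
proof -
  have q1: "norm q \<le> 1" using q by simp
  have b1: "norm (q ^ (r * r) * S_sum q (int r)) \<le> 2 * real r + 1"
    by (rule S_bound[OF q0 q1]) simp
  have b2: "norm (q ^ (r * r - r) * S_sum q (int r - 1)) \<le> 2 * real r + 1"
  proof (cases r)
    case 0 then show ?thesis by (simp add: S_sum_m1)
  next
    case (Suc m)
    have "int r - 1 = int m" by (simp add: Suc)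
    moreover have "m * m \<le> r * r - r" by (simp add: Suc)
    ultimately have "norm (q ^ (r * r - r) * S_sum q (int r - 1)) \<le> 2 * real m + 1"
      using S_bound[OF q0 q1] by simp
    then show ?thesis by (simp add: Suc)
  qed
  have e: "alpha q r = (1 + q ^ r) * (q ^ (r * r) * S_sum q (int r) - q ^ (r * r - r) * S_sum q (int r - 1))"
  proof -
    have "q ^ (r * r) = q ^ (r * r - r) * q ^ r" by (simp add: power_add[symmetric] sq_sub)
    then show ?thesis by (simp add: alpha_def algebra_simps)
  qed
  have n1: "norm (1 + q ^ r) \<le> 2"
  proof -
    have "norm (1 + q ^ r) \<le> 1 + norm (q ^ r)" by (rule norm_triangle_le) simp
    also have "norm (q ^ r) \<le> 1" by (rule norm_qpow_le1[OF q])
    finally show ?thesis by simp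
  qed
  have "norm (alpha q r) \<le> 2 * ((2 * real r + 1) + (2 * real r + 1))"
    unfolding e norm_mult
    by (intro mult_mono n1 order.trans[OF norm_triangle_ineq4] add_mono b1 b2) auto
  then show ?thesis by simp
qed


lemma lin_geo_bound:
  fixes t :: real
  assumes t: "t > 1"
  shows "real r + 1 \<le> (1 + 1 / (t - 1)) * t ^ r"
proof -
  have "1 + real r * (t - 1) \<le> (1 + (t - 1)) ^ r"
    using t by (intro Bernoulli_inequality) auto
  then have b: "1 + real r * (t - 1) \<le> t ^ r" by simp
  have t1: "1 \<le> t ^ r" using t by simp
  have "real r \<le> (t ^ r - 1) / (t - 1)" using b t by (simp add: field_simps)
  also have "\<dots> \<le> t ^ r / (t - 1)" using t by (intro divide_right_mono) auto
  finally have "real r + 1 \<le> t ^ r / (t - 1) + t ^ r" using t1 by linarith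
  then show ?thesis by (simp add: algebra_simps)
qed

lemma geo_sum_bound:
  fixes t :: real
  assumes t: "t > 1"
  shows "(\<Sum>r\<le>n. t ^ r) \<le> t ^ Suc n / (t - 1)"
proof -
  have "(1 - t) * (\<Sum>r\<le>n. t ^ r) = 1 - t ^ Suc n" by (rule sum_gp_basic)
  then have "(\<Sum>r\<le>n. t ^ r) = (t ^ Suc n - 1) / (t - 1)" using t by (simp add: field_simps)
  also have "\<dots> \<le> t ^ Suc n / (t - 1)" using t by (intro divide_right_mono) auto
  finally show ?thesis .
qed


lemma inner_gauss:
  fixes q a c :: complex
  assumes q0: "q \<noteq> 0" and q: "norm q < 1" and a0: "a \<noteq> 0" and c0: "c \<noteq> 0"
    and qa: "norm q < norm a" and a1: "norm a < 1" and c1: "norm c < 1" and x: "norm (a * c / q) < 1"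
  shows "(\<lambda>k. qpoch (q / a) q (r + k) * qpoch (q / c) q (r + k) * (a * c / q) ^ (r + k) * (alpha q r * cc q (r + k) r))
    sums (qpoch (q / a) q r * qpoch (q / c) q r / (qpoch a q r * qpoch c q r) * (a * c / q) ^ r * alpha q r *
          (qpoch_inf a q * qpoch_inf c q / (qpoch_inf q q * qpoch_inf (a * c / q) q)))"
proof -
  define x where "x = a * c / q"
  define A where "A = q / c * q ^ r"
  define B where "B = q / a * q ^ r"
  define C where "C = q * q ^ (r + r)"
  define K where "K = qpoch (q / a) q r * qpoch (q / c) q r * x ^ r * alpha q r / qpoch q q (r + r)"
  have qpow: "norm (q ^ k) \<le> 1" for k by (rule norm_qpow_le1[OF q])
  have Bn: "norm B < 1"
  proof -
    have "norm (q / a) < 1" using qa a0 by (simp add: norm_divide)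
    then show ?thesis unfolding B_def by (rule norm_mult_lt1[OF _ qpow])
  qed
  have B0: "B \<noteq> 0" using q0 a0 by (simp add: B_def)
  have A0: "A \<noteq> 0" using q0 c0 by (simp add: A_def)
  have CAB: "C / (A * B) = x" using q0 a0 c0 by (simp add: C_def A_def B_def x_def field_simps power_add)
  have xn: "norm (C / (A * B)) < 1" using x by (simp add: CAB x_def)
  have Cn: "norm C < 1" unfolding C_def by (rule norm_mult_lt1[OF q qpow])
  have CBe: "C / B = a * q ^ r" using q0 a0 by (simp add: C_def B_def field_simps power_add)
  have CAe: "C / A = c * q ^ r" using q0 c0 by (simp add: C_def A_def field_simps power_add)
  have aq: "norm (a * q ^ r) < 1" by (rule norm_mult_lt1[OF a1 qpow])
  have G: "phi q A B C x sums (qpoch_inf (c * q ^ r) q * qpoch_inf (a * q ^ r) q / (qpoch_inf C q * qpoch_inf x q))"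
    using qgauss[OF q Bn B0 A0 xn small_all[OF Cn q]] small_all[OF aq q] unfolding CAB CBe CAe by simp
  have tmq: "qpoch (q / a) q (r + k) * qpoch (q / c) q (r + k) * x ^ (r + k) * (alpha q r * cc q (r + k) r) = K * phi q A B C x k" for k
  proof -
    have e1: "qpoch (q / a) q (r + k) = qpoch (q / a) q r * qpoch B q k" by (simp add: qpoch_add B_def)
    have e2: "qpoch (q / c) q (r + k) = qpoch (q / c) q r * qpoch A q k" by (simp add: qpoch_add A_def)
    have e3: "qpoch q q (r + k + r) = qpoch q q (r + r) * qpoch C q k"
    proof -
      have ee: "r + k + r = (r + r) + k" by simp
      show ?thesis unfolding ee C_def by (rule qpoch_add)
    qed
    have cce: "cc q (r + k) r = 1 / (qpoch q q k * qpoch q q (r + k + r))" by (simp add: cc_def)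
    show ?thesis
      unfolding e1 e2 cce e3 K_def phi_def using qpoch_qq_nonzero[OF q, of k] qpoch_qq_nonzero[OF q, of "r + r"]
        qpoch_nonzero[of k C q] small_all[OF Cn q]
      by (simp add: field_simps power_add)
  qed
  have "(\<lambda>k. K * phi q A B C x k) sums (K * (qpoch_inf (c * q ^ r) q * qpoch_inf (a * q ^ r) q / (qpoch_inf C q * qpoch_inf x q)))"
    by (rule sums_mult[OF G])
  moreover have eqn: "K * (qpoch_inf (c * q ^ r) q * qpoch_inf (a * q ^ r) q / (qpoch_inf C q * qpoch_inf x q))
    = qpoch (q / a) q r * qpoch (q / c) q r / (qpoch a q r * qpoch c q r) * x ^ r * alpha q r *
          (qpoch_inf a q * qpoch_inf c q / (qpoch_inf q q * qpoch_inf x q))"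
  proof -
    have t1: "qpoch_inf (c * q ^ r) q = qpoch_inf c q / qpoch c q r" by (rule qpoch_tail[OF q]) (use small_all[OF c1 q] in auto)
    have t2: "qpoch_inf (a * q ^ r) q = qpoch_inf a q / qpoch a q r" by (rule qpoch_tail[OF q]) (use small_all[OF a1 q] in auto)
    have t3: "qpoch_inf C q = qpoch_inf q q / qpoch q q (r + r)" unfolding C_def
      by (rule qpoch_tail[OF q]) (use qq_nonzero[OF q] in auto)
    have nz: "qpoch c q r \<noteq> 0" "qpoch a q r \<noteq> 0" "qpoch q q (r + r) \<noteq> 0" "qpoch_inf q q \<noteq> 0" "qpoch_inf x q \<noteq> 0"
      using qpoch_nonzero[of r c q] small_all[OF c1 q] qpoch_nonzero[of r a q] small_all[OF a1 q]
        qpoch_qq_nonzero[OF q] qpoch_inf_nonzero[OF q qq_nonzero[OF q]] qpoch_inf_nonzero[OF q small_all[OF x[folded x_def] q]]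
      by auto
    show ?thesis unfolding t1 t2 t3 K_def using nz by (simp add: field_simps)
  qed
  ultimately have S1: "(\<lambda>k. K * phi q A B C x k) sums (qpoch (q / a) q r * qpoch (q / c) q r / (qpoch a q r * qpoch c q r) * x ^ r * alpha q r *
          (qpoch_inf a q * qpoch_inf c q / (qpoch_inf q q * qpoch_inf x q)))" by simp
  have S2: "(\<lambda>k. qpoch (q / a) q (r + k) * qpoch (q / c) q (r + k) * x ^ (r + k) * (alpha q r * cc q (r + k) r)) = (\<lambda>k. K * phi q A B C x k)"
    by (rule ext) (rule tmq)
  show ?thesis using S1 unfolding x_def[symmetric] S2 .
qed


theorem bailey_lemma:
  fixes q a c :: complex
  assumes q0: "q \<noteq> 0" and q: "norm q < 1" and a0: "a \<noteq> 0" and c0: "c \<noteq> 0"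
    and qa: "norm q < norm a" and a1: "norm a < 1" and c1: "norm c < 1" and x: "norm (a * c / q) < 1"
  shows "(\<Sum>n. qpoch (q / a) q n * qpoch (q / c) q n * (a * c / q) ^ n * (2 * (-1) ^ n / (qpoch q q n * qpoch (-1) q n)))
    = qpoch_inf a q * qpoch_inf c q / (qpoch_inf q q * qpoch_inf (a * c / q) q) *
      (\<Sum>r. qpoch (q / a) q r * qpoch (q / c) q r / (qpoch a q r * qpoch c q r) * (a * c / q) ^ r * alpha q r)"
    and "summable (\<lambda>r. qpoch (q / a) q r * qpoch (q / c) q r / (qpoch a q r * qpoch c q r) * (a * c / q) ^ r * alpha q r)"
proof -
  define X where "X = a * c / q"
  define \<rho> where "\<rho> = (\<lambda>n. qpoch (q / a) q n * qpoch (q / c) q n)"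
  define g where "g = (\<lambda>n r. if r \<le> n then \<rho> n * X ^ n * (alpha q r * cc q n r) else 0)"
  define T where "T = (\<lambda>r. qpoch (q / a) q r * qpoch (q / c) q r / (qpoch a q r * qpoch c q r) * X ^ r * alpha q r)"
  define K0 where "K0 = qpoch_inf a q * qpoch_inf c q / (qpoch_inf q q * qpoch_inf X q)"
  have Xn: "norm X < 1" using x by (simp add: X_def)
  have inner_n: "(\<Sum>r. g n r) = \<rho> n * X ^ n * (2 * (-1) ^ n / (qpoch q q n * qpoch (-1) q n))" for n
  proof -
    have "(\<Sum>r. g n r) = (\<Sum>r\<le>n. g n r)" by (rule suminf_finite) (auto simp: g_def)
    also have "\<dots> = (\<Sum>r\<le>n. \<rho> n * X ^ n * (alpha q r * cc q n r))" by (rule sum.cong) (auto simp: g_def)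
    also have "\<dots> = \<rho> n * X ^ n * (\<Sum>r\<le>n. alpha q r * cc q n r)" by (simp add: sum_distrib_left)
    finally show ?thesis unfolding bailey_pair[OF q0 q] .
  qed
  have inner_r: "(\<lambda>n. g n r) sums (T r * K0)" for r
  proof -
    have "(\<lambda>k. g (k + r) r) sums (T r * K0)"
    proof -
      have "(\<lambda>k. g (k + r) r) = (\<lambda>k. qpoch (q / a) q (r + k) * qpoch (q / c) q (r + k) * (a * c / q) ^ (r + k) * (alpha q r * cc q (r + k) r))"
        by (rule ext) (simp add: g_def \<rho>_def X_def add.commute)
      then show ?thesis using inner_gauss[OF q0 q a0 c0 qa a1 c1 x, of r] by (simp add: T_def K0_def X_def)
    qed
    then show ?thesis by (subst (asm) sums_zero_iff_shift) (auto simp: g_def)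
  qed
  obtain \<delta> where \<delta>: "\<delta> > 0" "\<And>k. \<delta> \<le> norm (qpoch q q k)" using qpoch_qq_lower[OF q] by blast
  define K\<rho> where "K\<rho> = exp (norm (q / a) / (1 - norm q)) * exp (norm (q / c) / (1 - norm q))"
  have K\<rho>: "norm (\<rho> n) \<le> K\<rho>" for n
    unfolding \<rho>_def K\<rho>_def norm_mult by (intro mult_mono qpoch_norm_le q) auto
  define t where "t = 2 / (1 + norm X)"
  have p1: "0 < 1 + norm X" by (simp add: add_pos_nonneg)
  have t1: "t > 1" unfolding t_def using p1 Xn by (simp add: less_divide_eq)
  have tX: "t * norm X < 1" unfolding t_def using p1 Xn by (simp add: divide_less_eq)
  define Ct where "Ct = 1 + 1 / (t - 1)"
  have Ct: "real r + 1 \<le> Ct * t ^ r" for r unfolding Ct_def by (rule lin_geo_bound[OF t1])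
  have ccb: "norm (cc q n r) \<le> 1 / (\<delta> * \<delta>)" for n r
  proof -
    have "norm (cc q n r) = 1 / (norm (qpoch q q (n - r)) * norm (qpoch q q (n + r)))"
      by (simp add: cc_def norm_divide norm_mult)
    also have "\<dots> \<le> 1 / (\<delta> * \<delta>)"
      using \<delta> qpoch_qq_nonzero[OF q] by (intro divide_left_mono mult_mono mult_pos_pos) auto
    finally show ?thesis .
  qed
  define L where "L = K\<rho> * (8 * Ct) / (\<delta> * \<delta>)"
  have L0: "L \<ge> 0" using \<delta> t1 by (simp add: L_def K\<rho>_def Ct_def)
  have gb: "norm (g n r) \<le> L * norm X ^ n * t ^ r" for n r
  proof (cases "r \<le> n")
    case True
    have "norm (g n r) = norm (\<rho> n) * norm X ^ n * norm (alpha q r) * norm (cc q n r)"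
      using True by (simp add: g_def norm_mult norm_power)
    also have "\<dots> \<le> K\<rho> * norm X ^ n * (8 * (Ct * t ^ r)) * (1 / (\<delta> * \<delta>))"
    proof (intro mult_mono K\<rho> ccb order.refl)
      show "norm (alpha q r) \<le> 8 * (Ct * t ^ r)"
        using order.trans[OF alpha_bound[OF q0 q, of r] mult_left_mono[OF Ct[of r], of 8]] by simp
    qed (use t1 \<delta> in \<open>auto simp: K\<rho>_def Ct_def\<close>)
    also have "\<dots> = L * norm X ^ n * t ^ r" by (simp add: L_def)
    finally show ?thesis .
  next
    case False
    then show ?thesis using L0 t1 by (simp add: g_def)
  qed
  have s1: "summable (\<lambda>r. norm (g n r))" for n
    by (rule summable_finite[of "{..n}"]) (auto simp: g_def)
  have s2: "summable (\<lambda>n. \<Sum>r. norm (g n r))"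
  proof (rule summable_comparison_test[where g="\<lambda>n. (L * t / (t - 1)) * (t * norm X) ^ n"])
    show "summable (\<lambda>n. (L * t / (t - 1)) * (t * norm X) ^ n)"
      using tX t1 Xn by (intro summable_mult summable_geometric) auto
    show "\<exists>N. \<forall>n\<ge>N. norm (\<Sum>r. norm (g n r)) \<le> L * t / (t - 1) * (t * norm X) ^ n"
    proof (intro exI allI impI)
      fix n :: nat
      have "(\<Sum>r. norm (g n r)) = (\<Sum>r\<le>n. norm (g n r))" by (rule suminf_finite) (auto simp: g_def)
      also have "\<dots> \<le> (\<Sum>r\<le>n. L * norm X ^ n * t ^ r)" by (rule sum_mono) (rule gb)
      also have "\<dots> = L * norm X ^ n * (\<Sum>r\<le>n. t ^ r)" by (simp add: sum_distrib_left)
      also have "\<dots> \<le> L * norm X ^ n * (t ^ Suc n / (t - 1))"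
        using L0 by (intro mult_left_mono geo_sum_bound[OF t1]) auto
      also have "\<dots> = L * t / (t - 1) * (t * norm X) ^ n" by (simp add: power_mult_distrib field_simps)
      finally have le: "(\<Sum>r. norm (g n r)) \<le> L * t / (t - 1) * (t * norm X) ^ n" .
      have "0 \<le> (\<Sum>r. norm (g n r))" using s1[of n] by (simp add: suminf_nonneg)
      then show "norm (\<Sum>r. norm (g n r)) \<le> L * t / (t - 1) * (t * norm X) ^ n" using le by simp
    qed
  qed
  have sw: "(\<Sum>n. \<Sum>r. g n r) = (\<Sum>r. \<Sum>n. g n r)" "summable (\<lambda>r. \<Sum>n. g n r)"
    using suminf_swap[OF s1 s2] by auto
  have V: "(\<Sum>n. g n r) = T r * K0" for r using inner_r[of r] by (simp add: sums_iff)
  have K0nz: "K0 \<noteq> 0"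
    using qpoch_inf_nonzero[OF q small_all[OF a1 q]] qpoch_inf_nonzero[OF q small_all[OF c1 q]]
      qpoch_inf_nonzero[OF q qq_nonzero[OF q]] qpoch_inf_nonzero[OF q small_all[OF Xn q]]
    by (simp add: K0_def)
  have sT: "summable T"
  proof -
    have "summable (\<lambda>r. T r * K0 * inverse K0)" using sw(2) unfolding V by (rule summable_mult2)
    then show ?thesis using K0nz by (simp add: mult.assoc)
  qed
  show "summable (\<lambda>r. qpoch (q / a) q r * qpoch (q / c) q r / (qpoch a q r * qpoch c q r) * (a * c / q) ^ r * alpha q r)"
    using sT unfolding T_def X_def .
  have "(\<Sum>n. \<rho> n * X ^ n * (2 * (-1) ^ n / (qpoch q q n * qpoch (-1) q n))) = (\<Sum>r. T r * K0)"
    using sw(1) unfolding inner_n V .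
  also have "\<dots> = K0 * suminf T" using suminf_mult2[OF sT, of K0] by (simp add: mult.commute)
  finally show "(\<Sum>n. qpoch (q / a) q n * qpoch (q / c) q n * (a * c / q) ^ n * (2 * (-1) ^ n / (qpoch q q n * qpoch (-1) q n)))
    = qpoch_inf a q * qpoch_inf c q / (qpoch_inf q q * qpoch_inf (a * c / q) q) *
      (\<Sum>r. qpoch (q / a) q r * qpoch (q / c) q r / (qpoch a q r * qpoch c q r) * (a * c / q) ^ r * alpha q r)"
    unfolding \<rho>_def X_def K0_def T_def by (simp add: mult_ac)
qed



lemma powi_exp:
  fixes q :: complex
  assumes q0: "q \<noteq> 0"
  shows "q powi (int m ^ 2 - 2 * int m) = q ^ (m * m - m) / q ^ m"
proof -
  have e: "int m ^ 2 - 2 * int m = int (m * m - m) - int m"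
    using le_square[of m] by (simp add: power2_eq_square of_nat_diff)
  have "q powi (int m ^ 2 - 2 * int m) = q powi (int (m * m - m) - int m)" unfolding e ..
  also have "\<dots> = q powi (int (m * m - m)) / q powi (int m)"
    by (rule power_int_diff) (use q0 in auto)
  finally have "q powi (int m ^ 2 - 2 * int m) = q powi (int (m * m - m)) / q powi (int m)" .
  then show ?thesis by (simp only: power_int_of_nat)
qed

lemma term_eq:
  fixes q a c :: complex
  assumes q0: "q \<noteq> 0"
  shows "(1 + q ^ m) * q powi (int m ^ 2 - 2 * int m)
           * (qpoch (q / a) q m * qpoch (q / c) q m * (a * c) ^ m)
             / (qpoch a q m * qpoch c q m)
           * (q ^ m * S_sum q (int m) - S_sum q (int m - 1))
    = qpoch (q / a) q m * qpoch (q / c) q m / (qpoch a q m * qpoch c q m) * (a * c / q) ^ m * alpha q m"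
  unfolding powi_exp[OF q0] alpha_def using q0 by (simp add: power_divide field_simps)

lemma qpoch_inf_m1:
  fixes q :: complex
  assumes q: "norm q < 1"
  shows "qpoch_inf (-1) q = 2 * qpoch_inf (- q) q"
  using qpoch_inf_split[OF q, of "-1" 1] by (simp add: qpoch_def)

theorem main_region:
  fixes q a c :: complex
  assumes "0 < norm q" "norm q < 1"
    and "a \<noteq> 0" "c \<noteq> 0" "norm a < 1" "norm (c / q) < 1" "norm (a * c / q) < 1"
    and qa: "norm q < norm a"
  shows "(\<Sum>n. qpoch (q / c) q n / qpoch (-a) q n * (- c / q) ^ n)
    = (qpoch_inf (-q) q * qpoch_inf a q * qpoch_inf c q * qpoch_inf (- a * c / q) q)
      / (qpoch_inf q q * qpoch_inf (-a) q * qpoch_inf (- c / q) q * qpoch_inf (a * c / q) q)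
      * (2 + (\<Sum>n. let m = Suc n in
           (1 + q ^ m) * q powi (int m ^ 2 - 2 * int m)
           * (qpoch (q / a) q m * qpoch (q / c) q m * (a * c) ^ m)
             / (qpoch a q m * qpoch c q m)
           * (q ^ m * S_sum q (int m) - S_sum q (int m - 1))))"
proof -
  have q0: "q \<noteq> 0" and q: "norm q < 1" using assms by auto
  have a0: "a \<noteq> 0" and c0: "c \<noteq> 0" and a1: "norm a < 1" and cq: "norm (c / q) < 1" and x: "norm (a * c / q) < 1"
    using assms by auto
  have c1: "norm c < 1"
  proof -
    have "norm c < norm q" using cq q0 by (simp add: norm_divide divide_less_eq)
    then show ?thesis using q by simp
  qed
  define T where "T = suminf (phi q (- a / q) (- c / q) (-1) q)"
  define U where "U = suminf (phi q (q / c) (q / a) (-1) (- a * c / q))"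
  define Tr where "Tr = (\<lambda>r. qpoch (q / a) q r * qpoch (q / c) q r / (qpoch a q r * qpoch c q r) * (a * c / q) ^ r * alpha q r)"
  have nzi: "qpoch_inf y q \<noteq> 0" if "norm y < 1" for y by (rule qpoch_inf_nonzero[OF q small_all[OF that q]])
  have na: "norm (- a) < 1" "norm (- c / q) < 1" "norm (- a * c / q) < 1" using a1 cq x by (auto simp: norm_divide norm_mult)
  have LHS: "(\<Sum>n. qpoch (q / c) q n / qpoch (-a) q n * (- c / q) ^ n)
      = qpoch_inf q q * qpoch_inf (-1) q / (qpoch_inf (-a) q * qpoch_inf (- c / q) q) * T"
  proof -
    have z: "norm (- c / q) < 1" using cq by (simp add: norm_divide)
    have Cadm: "\<And>k. (- a) * q ^ k \<noteq> 1" by (rule small_all[OF na(1) q])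
    have Az: "q / c * (- c / q) = -1" using q0 c0 by simp
    have Azadm: "\<And>k. q / c * (- c / q) * q ^ k \<noteq> 1" unfolding Az by (rule neg1_adm[OF q])
    have h: "phi q (q / c) q (- a) (- c / q) sums
      (qpoch_inf q q * qpoch_inf (q / c * (- c / q)) q / (qpoch_inf (- a) q * qpoch_inf (- c / q) q) * suminf (phi q (- a / q) (- c / q) (q / c * (- c / q)) q))"
      using heine_phi[OF q q q0 z Cadm Azadm] by simp
    have "phi q (q / c) q (- a) (- c / q) = (\<lambda>n. qpoch (q / c) q n / qpoch (-a) q n * (- c / q) ^ n)"
      by (rule ext) (use qpoch_qq_nonzero[OF q] in \<open>simp add: phi_def\<close>)
    then show ?thesis using h unfolding Az T_def by (simp add: sums_iff)
  qed
  have EU: "U = qpoch_inf q q / qpoch_inf (- a * c / q) q * T"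
  proof -
    have "U = qpoch_inf q q / qpoch_inf (- a * c / q) q * suminf (phi q (- c / q) (- a / q) (-1) q)"
      unfolding U_def by (rule euler_spec[OF q0 q a0 qa a1 c0 x])
    then show ?thesis unfolding T_def by (simp add: phi_comm)
  qed
  have BL: "2 * U = qpoch_inf a q * qpoch_inf c q / (qpoch_inf q q * qpoch_inf (a * c / q) q) * suminf Tr"
  proof -
    have sU: "summable (phi q (q / c) (q / a) (-1) (- a * c / q))"
      by (rule phi_summable[OF q na(3) neg1_adm[OF q]])
    have "(\<lambda>n. qpoch (q / a) q n * qpoch (q / c) q n * (a * c / q) ^ n * (2 * (-1) ^ n / (qpoch q q n * qpoch (-1) q n)))
        = (\<lambda>n. 2 * phi q (q / c) (q / a) (-1) (- a * c / q) n)"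
      by (rule ext) (simp add: phi_def power_minus[of "a * c / q"] field_simps)
    then have "(\<Sum>n. qpoch (q / a) q n * qpoch (q / c) q n * (a * c / q) ^ n * (2 * (-1) ^ n / (qpoch q q n * qpoch (-1) q n))) = 2 * U"
      unfolding U_def using suminf_mult[OF sU, of 2] by simp
    then show ?thesis using bailey_lemma(1)[OF q0 q a0 c0 qa a1 c1 x] unfolding Tr_def by simp
  qed
  have sTr: "summable Tr" unfolding Tr_def by (rule bailey_lemma(2)[OF q0 q a0 c0 qa a1 c1 x])
  have SER: "2 + (\<Sum>n. let m = Suc n in
           (1 + q ^ m) * q powi (int m ^ 2 - 2 * int m)
           * (qpoch (q / a) q m * qpoch (q / c) q m * (a * c) ^ m)
             / (qpoch a q m * qpoch c q m)
           * (q ^ m * S_sum q (int m) - S_sum q (int m - 1))) = suminf Tr"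
  proof -
    have "(\<lambda>n. let m = Suc n in
           (1 + q ^ m) * q powi (int m ^ 2 - 2 * int m)
           * (qpoch (q / a) q m * qpoch (q / c) q m * (a * c) ^ m)
             / (qpoch a q m * qpoch c q m)
           * (q ^ m * S_sum q (int m) - S_sum q (int m - 1))) = (\<lambda>n. Tr (Suc n))"
      by (rule ext) (simp only: Let_def term_eq[OF q0] Tr_def)
    moreover have "Tr 0 = 2" by (simp add: Tr_def alpha_def S_sum_0 S_sum_m1)
    ultimately show ?thesis using suminf_split_head[OF sTr] by simp
  qed
  have m1: "qpoch_inf (-1) q = 2 * qpoch_inf (- q) q" by (rule qpoch_inf_m1[OF q])
  have nzs: "qpoch_inf a q \<noteq> 0" "qpoch_inf c q \<noteq> 0" "qpoch_inf (a * c / q) q \<noteq> 0" "qpoch_inf q q \<noteq> 0"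
    "qpoch_inf (- a) q \<noteq> 0" "qpoch_inf (- c / q) q \<noteq> 0" "qpoch_inf (- a * c / q) q \<noteq> 0"
    using nzi[OF a1] nzi[OF c1] nzi[OF x] qpoch_inf_nonzero[OF q qq_nonzero[OF q]] nzi[OF na(1)] nzi[OF na(2)] nzi[OF na(3)]
    by auto
  have STr: "suminf Tr = 2 * U * (qpoch_inf q q * qpoch_inf (a * c / q) q) / (qpoch_inf a q * qpoch_inf c q)"
    using BL nzs by (simp add: field_simps)
  show ?thesis unfolding LHS SER STr EU m1 using nzs by (simp add: field_simps)
qed



lemma H_bound:
  fixes q w :: complex and V :: "nat \<Rightarrow> complex"
  assumes q0: "q \<noteq> 0" and q: "norm q < 1" and w: "norm w < 1"
    and V: "\<And>m. norm (V m) \<le> KV * (real m + 1)"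
    and a0: "a0 \<in> ball 0 1 - {0}"
  shows "\<exists>d>0. cball a0 d \<subseteq> ball 0 1 - {0} \<and> (\<exists>M. summable M \<and> (\<forall>n. \<forall>y\<in>cball a0 d.
     norm (qpoch (q / y) q (Suc n) * y ^ (Suc n) * qpoch_inf (y * q ^ (Suc n)) q * (w ^ (Suc n) * V (Suc n))) \<le> M n))"
proof -
  have na0: "0 < norm a0" "norm a0 < 1" using a0 by auto
  define d where "d = min (norm a0 / 2) ((1 - norm a0) / 2)"
  define r where "r = norm a0 / 2"
  define R where "R = norm a0 + d"
  have d: "d > 0" using na0 by (simp add: d_def)
  have r: "r > 0" using na0 by (simp add: r_def)
  have dle: "d \<le> (1 - norm a0) / 2" unfolding d_def by (rule min.cobounded2)
  have dle2: "2 * d \<le> 1 - norm a0" using dle by simp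
  have R1a: "R < 1" using na0 d dle2 unfolding R_def by linarith
  have R1b: "R \<ge> 0" using na0 d unfolding R_def by linarith
  note R1 = R1a R1b
  have bnd: "r \<le> norm y \<and> norm y \<le> R" if "y \<in> cball a0 d" for y
  proof -
    have "norm (y - a0) \<le> d" using that by (simp add: dist_norm norm_minus_commute)
    moreover have "norm a0 - norm (y - a0) \<le> norm y" using norm_triangle_ineq2[of a0 y] by (simp add: norm_minus_commute)
    moreover have "norm y \<le> norm a0 + norm (y - a0)" using norm_triangle_ineq[of a0 "y - a0"] by simp
    moreover have "d \<le> norm a0 / 2" by (simp add: d_def)
    ultimately show ?thesis unfolding r_def R_def by linarith
  qed
  have sub: "cball a0 d \<subseteq> ball 0 1 - {0}"
  proof
    fix y assume y: "y \<in> cball a0 d"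
    then have "r \<le> norm y" "norm y \<le> R" using bnd by auto
    then show "y \<in> ball 0 1 - {0}" using r R1 by auto
  qed
  define \<rho> where "\<rho> = R * norm w"
  have \<rho>: "\<rho> < 1" "\<rho> \<ge> 0"
  proof -
    have "R * norm w \<le> 1 * norm w" using R1 by (intro mult_right_mono) auto
    then show "\<rho> < 1" using w by (simp add: \<rho>_def)
    show "\<rho> \<ge> 0" using R1 by (simp add: \<rho>_def)
  qed
  define t where "t = 2 / (1 + \<rho>)"
  have p1: "0 < 1 + \<rho>" using \<rho> by simp
  have t1: "t > 1" unfolding t_def using p1 \<rho> by (simp add: less_divide_eq)
  have t\<rho>: "t * \<rho> < 1" unfolding t_def using p1 \<rho> by (simp add: divide_less_eq)
  define Ct where "Ct = 1 + 1 / (t - 1)"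
  have Ct: "real m + 1 \<le> Ct * t ^ m" for m unfolding Ct_def by (rule lin_geo_bound[OF t1])
  have KV0: "KV \<ge> 0" using V[of 0] norm_ge_zero[of "V 0"] by (simp del: norm_ge_zero)
  define E where "E = exp ((norm q / r) / (1 - norm q)) * exp (R / (1 - norm q)) * KV * Ct"
  have E0: "E \<ge> 0" using KV0 t1 by (simp add: E_def Ct_def)
  show ?thesis
  proof (intro exI conjI allI ballI)
    show "d > 0" by (rule d)
    show "cball a0 d \<subseteq> ball 0 1 - {0}" by (rule sub)
    show "summable (\<lambda>n. E * (t * \<rho>) ^ Suc n)"
      using t\<rho> t1 \<rho> by (intro summable_mult summable_Suc_iff[THEN iffD2] summable_geometric) auto
    fix n y assume y: "y \<in> cball a0 d"
    have ry: "r \<le> norm y" "norm y \<le> R" using bnd[OF y] by auto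
    have y0: "y \<noteq> 0" using ry r by auto
    have yr: "0 < norm y * r" using ry r by (intro mult_pos_pos) auto
    have qy: "norm (q / y) \<le> norm q / r" unfolding norm_divide using ry r yr by (intro divide_left_mono) auto
    have "norm (qpoch (q / y) q (Suc n) * y ^ (Suc n) * qpoch_inf (y * q ^ (Suc n)) q * (w ^ (Suc n) * V (Suc n)))
      = norm (qpoch (q / y) q (Suc n)) * norm (qpoch_inf (y * q ^ (Suc n)) q) * (norm y * norm w) ^ Suc n * norm (V (Suc n))"
      by (simp add: norm_mult norm_power power_mult_distrib mult_ac)
    also have "\<dots> \<le> exp ((norm q / r) / (1 - norm q)) * exp (R / (1 - norm q)) * \<rho> ^ Suc n * (KV * (Ct * t ^ Suc n))"
    proof (intro mult_mono qpoch_norm_le_R qpoch_inf_norm_le_R q norm_mult_qpow_le power_mono qy)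
      show "norm y \<le> R" by (rule ry(2))
      show "norm y * norm w \<le> \<rho>" unfolding \<rho>_def using ry by (intro mult_right_mono) auto
      show "norm (V (Suc n)) \<le> KV * (Ct * t ^ Suc n)"
        using order.trans[OF V[of "Suc n"] mult_left_mono[OF Ct[of "Suc n"] KV0]] .
    qed (use KV0 t1 \<rho> in \<open>auto simp: Ct_def\<close>)
    also have "\<dots> = E * (t * \<rho>) ^ Suc n" by (simp add: E_def power_mult_distrib mult_ac)
    finally show "norm (qpoch (q / y) q (Suc n) * y ^ (Suc n) * qpoch_inf (y * q ^ (Suc n)) q * (w ^ (Suc n) * V (Suc n))) \<le> E * (t * \<rho>) ^ Suc n" .
  qed
qed

lemma H_holo:
  fixes q w :: complex and V :: "nat \<Rightarrow> complex"
  assumes q0: "q \<noteq> 0" and q: "norm q < 1" and w: "norm w < 1"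
    and V: "\<And>m. norm (V m) \<le> KV * (real m + 1)"
  shows "(\<lambda>a. \<Sum>n. qpoch (q / a) q (Suc n) * a ^ (Suc n) * qpoch_inf (a * q ^ (Suc n)) q * (w ^ (Suc n) * V (Suc n)))
           holomorphic_on (ball 0 1 - {0})"
proof (rule holo_suminf)
  show "open (ball (0::complex) 1 - {0})" by (simp add: open_delete)
  show "(\<lambda>a. qpoch (q / a) q (Suc n) * a ^ (Suc n) * qpoch_inf (a * q ^ (Suc n)) q * (w ^ (Suc n) * V (Suc n)))
           holomorphic_on (ball 0 1 - {0})" for n
    by (intro holomorphic_intros qpoch_holo_comp qpoch_inf_holo_comp q) auto
  fix x assume "x \<in> ball (0::complex) 1 - {0}"
  then show "\<exists>d>0. cball x d \<subseteq> ball 0 1 - {0} \<and> (\<exists>M. summable M \<and> (\<forall>n. \<forall>y\<in>cball x d.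
     norm (qpoch (q / y) q (Suc n) * y ^ (Suc n) * qpoch_inf (y * q ^ (Suc n)) q * (w ^ (Suc n) * V (Suc n))) \<le> M n))"
    by (rule H_bound[OF q0 q w V])
qed

lemma H_summable:
  fixes q w :: complex and V :: "nat \<Rightarrow> complex"
  assumes q0: "q \<noteq> 0" and q: "norm q < 1" and w: "norm w < 1"
    and V: "\<And>m. norm (V m) \<le> KV * (real m + 1)"
    and a: "a \<in> ball 0 1 - {0}"
  shows "summable (\<lambda>n. qpoch (q / a) q (Suc n) * a ^ (Suc n) * qpoch_inf (a * q ^ (Suc n)) q * (w ^ (Suc n) * V (Suc n)))"
proof -
  obtain d M where dM: "d > 0" "summable M" "\<And>n y. y \<in> cball a d \<Longrightarrow>
     norm (qpoch (q / y) q (Suc n) * y ^ (Suc n) * qpoch_inf (y * q ^ (Suc n)) q * (w ^ (Suc n) * V (Suc n))) \<le> M n"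
    using H_bound[OF q0 q w V a] by blast
  have "a \<in> cball a d" using dM(1) by simp
  then show ?thesis
    by (intro summable_comparison_test[OF _ dM(2)]) (use dM(3) in blast)
qed



lemma V_bound:
  fixes q c :: complex
  assumes q0: "q \<noteq> 0" and q: "norm q < 1" and c1: "norm c < 1"
  shows "\<exists>KV. \<forall>m. norm (qpoch (q / c) q m / qpoch c q m * alpha q m) \<le> KV * (real m + 1)"
proof -
  obtain d where d: "d > 0" "\<And>m. d \<le> norm (qpoch c q m)" using qpoch_lower[OF q small_all[OF c1 q]] by blast
  define E where "E = exp (norm (q / c) / (1 - norm q))"
  show ?thesis
  proof (intro exI allI)
    fix m
    have "norm (qpoch (q / c) q m / qpoch c q m * alpha q m) = norm (qpoch (q / c) q m) / norm (qpoch c q m) * norm (alpha q m)"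
      by (simp add: norm_mult norm_divide)
    also have "\<dots> \<le> E / d * (8 * (real m + 1))"
      unfolding E_def by (intro mult_mono frac_le qpoch_norm_le q alpha_bound[OF q0 q] d) (use d in auto)
    also have "\<dots> = (E / d * 8) * (real m + 1)" by (simp only: mult.assoc)
    finally show "norm (qpoch (q / c) q m / qpoch c q m * alpha q m) \<le> (E / d * 8) * (real m + 1)" .
  qed
qed

lemma conv1:
  fixes q a c :: complex
  assumes q0: "q \<noteq> 0" and q: "norm q < 1" and c0: "c \<noteq> 0" and cq: "norm (c / q) < 1" and a1: "norm a < 1"
  shows "(\<Sum>n. qpoch (q / c) q n * (- c / q) ^ n * qpoch_inf ((- a) * q ^ n) q)
       = qpoch_inf (- a) q * (\<Sum>n. qpoch (q / c) q n / qpoch (-a) q n * (- c / q) ^ n)"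
proof -
  have z: "norm (- c / q) < 1" using cq by (simp add: norm_divide)
  have Cadm: "\<And>k. (- a) * q ^ k \<noteq> 1" by (rule small_all) (use a1 q in auto)
  have "qpoch_inf (- a) q * suminf (phi q (q / c) q (- a) (- c / q)) =
    (\<Sum>n. qpoch (q / c) q n * qpoch q q n / qpoch q q n * (- c / q) ^ n * qpoch_inf ((- a) * q ^ n) q)"
    by (rule phi_times_inf[OF q z Cadm])
  also have "\<dots> = (\<Sum>n. qpoch (q / c) q n * (- c / q) ^ n * qpoch_inf ((- a) * q ^ n) q)"
    using qpoch_qq_nonzero[OF q] by simp
  also have "phi q (q / c) q (- a) (- c / q) = (\<lambda>n. qpoch (q / c) q n / qpoch (-a) q n * (- c / q) ^ n)"
    by (rule ext) (use qpoch_qq_nonzero[OF q] in \<open>simp add: phi_def\<close>)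
  ultimately show ?thesis by simp
qed

lemma conv2:
  fixes q a c :: complex
  assumes q0: "q \<noteq> 0" and q: "norm q < 1" and c0: "c \<noteq> 0" and cq: "norm (c / q) < 1" and c1: "norm c < 1"
    and a: "a \<in> ball 0 1 - {0}"
  shows "(\<Sum>n. qpoch (q / a) q (Suc n) * a ^ (Suc n) * qpoch_inf (a * q ^ (Suc n)) q *
             ((c / q) ^ (Suc n) * (qpoch (q / c) q (Suc n) / qpoch c q (Suc n) * alpha q (Suc n))))
    = qpoch_inf a q * (\<Sum>n. let m = Suc n in
           (1 + q ^ m) * q powi (int m ^ 2 - 2 * int m)
           * (qpoch (q / a) q m * qpoch (q / c) q m * (a * c) ^ m)
             / (qpoch a q m * qpoch c q m)
           * (q ^ m * S_sum q (int m) - S_sum q (int m - 1)))"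
proof -
  obtain KV where KV: "\<And>m. norm (qpoch (q / c) q m / qpoch c q m * alpha q m) \<le> KV * (real m + 1)"
    using V_bound[OF q0 q c1] by blast
  have a1: "norm a < 1" and a0: "a \<noteq> 0" using a by auto
  have sH: "summable (\<lambda>n. qpoch (q / a) q (Suc n) * a ^ (Suc n) * qpoch_inf (a * q ^ (Suc n)) q *
             ((c / q) ^ (Suc n) * (qpoch (q / c) q (Suc n) / qpoch c q (Suc n) * alpha q (Suc n))))"
    by (rule H_summable[OF q0 q cq KV a])
  have ainf: "qpoch_inf a q \<noteq> 0" by (rule qpoch_inf_nonzero[OF q small_all[OF a1 q]])
  have tm: "qpoch (q / a) q (Suc n) * a ^ (Suc n) * qpoch_inf (a * q ^ (Suc n)) q *
             ((c / q) ^ (Suc n) * (qpoch (q / c) q (Suc n) / qpoch c q (Suc n) * alpha q (Suc n)))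
     = qpoch_inf a q * (let m = Suc n in
           (1 + q ^ m) * q powi (int m ^ 2 - 2 * int m)
           * (qpoch (q / a) q m * qpoch (q / c) q m * (a * c) ^ m)
             / (qpoch a q m * qpoch c q m)
           * (q ^ m * S_sum q (int m) - S_sum q (int m - 1)))" for n
  proof -
    have t: "qpoch_inf (a * q ^ (Suc n)) q = qpoch_inf a q / qpoch a q (Suc n)"
      by (rule qpoch_tail[OF q]) (use small_all[OF a1 q] in auto)
    have nz: "qpoch a q (Suc n) \<noteq> 0" using qpoch_nonzero small_all[OF a1 q] by blast
    show ?thesis unfolding Let_def term_eq[OF q0] t using nz q0
      by (simp add: power_mult_distrib power_divide field_simps)
  qed
  have sT: "summable (\<lambda>n. qpoch_inf a q * (let m = Suc n in
           (1 + q ^ m) * q powi (int m ^ 2 - 2 * int m)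
           * (qpoch (q / a) q m * qpoch (q / c) q m * (a * c) ^ m)
             / (qpoch a q m * qpoch c q m)
           * (q ^ m * S_sum q (int m) - S_sum q (int m - 1))))"
    using sH unfolding tm .
  then have sT2: "summable (\<lambda>n. let m = Suc n in
           (1 + q ^ m) * q powi (int m ^ 2 - 2 * int m)
           * (qpoch (q / a) q m * qpoch (q / c) q m * (a * c) ^ m)
             / (qpoch a q m * qpoch c q m)
           * (q ^ m * S_sum q (int m) - S_sum q (int m - 1)))"
    using ainf by (rule summable_mult_D)
  show ?thesis unfolding tm by (rule suminf_mult[OF sT2])
qed

theorem theorem7p1:
  fixes q a c :: complex
  assumes "0 < norm q" "norm q < 1"
    and "a \<noteq> 0" "c \<noteq> 0" "norm a < 1" "norm (c / q) < 1" "norm (a * c / q) < 1"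
  shows "(\<Sum>n. qpoch (q / c) q n / qpoch (-a) q n * (- c / q) ^ n)
    = (qpoch_inf (-q) q * qpoch_inf a q * qpoch_inf c q * qpoch_inf (- a * c / q) q)
      / (qpoch_inf q q * qpoch_inf (-a) q * qpoch_inf (- c / q) q * qpoch_inf (a * c / q) q)
      * (2 + (\<Sum>n. let m = Suc n in
           (1 + q ^ m) * q powi (int m ^ 2 - 2 * int m)
           * (qpoch (q / a) q m * qpoch (q / c) q m * (a * c) ^ m)
             / (qpoch a q m * qpoch c q m)
           * (q ^ m * S_sum q (int m) - S_sum q (int m - 1))))"
proof -
  have q0: "q \<noteq> 0" and q: "norm q < 1" using assms by auto
  have c0: "c \<noteq> 0" and cq: "norm (c / q) < 1" using assms by auto
  have c1: "norm c < 1"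
  proof -
    have "norm c < norm q" using cq q0 by (simp add: norm_divide divide_less_eq)
    then show ?thesis using q by simp
  qed
  define S where "S = ball (0::complex) 1 - {0}"
  define U where "U = {a :: complex. norm q < norm a \<and> norm a < 1}"
  define LHS where "LHS = (\<lambda>a. \<Sum>n. qpoch (q / c) q n / qpoch (-a) q n * (- c / q) ^ n)"
  define SR where "SR = (\<lambda>a. \<Sum>n. let m = Suc n in
           (1 + q ^ m) * q powi (int m ^ 2 - 2 * int m)
           * (qpoch (q / a) q m * qpoch (q / c) q m * (a * c) ^ m)
             / (qpoch a q m * qpoch c q m)
           * (q ^ m * S_sum q (int m) - S_sum q (int m - 1)))"
  define Lh where "Lh = (\<lambda>a. \<Sum>n. qpoch (q / c) q n * (- c / q) ^ n * qpoch_inf ((- a) * q ^ n) q)"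
  define Hs where "Hs = (\<lambda>a. \<Sum>n. qpoch (q / a) q (Suc n) * a ^ (Suc n) * qpoch_inf (a * q ^ (Suc n)) q *
             ((c / q) ^ (Suc n) * (qpoch (q / c) q (Suc n) / qpoch c q (Suc n) * alpha q (Suc n))))"
  define F where "F = (\<lambda>a. qpoch_inf q q * qpoch_inf (- c / q) q * qpoch_inf (a * c / q) q * Lh a)"
  define G where "G = (\<lambda>a. qpoch_inf (- q) q * qpoch_inf c q * qpoch_inf (- a * c / q) q * (2 * qpoch_inf a q + Hs a))"
  have nzi: "qpoch_inf y q \<noteq> 0" if "norm y < 1" for y by (rule qpoch_inf_nonzero[OF q small_all[OF that q]])
  have small: "norm (- a) < 1" "norm (a * c / q) < 1" "norm (- a * c / q) < 1" if "norm a < 1" for a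
  proof -
    have "norm (a * c / q) = norm a * norm (c / q)" by (simp add: norm_mult norm_divide)
    also have "\<dots> < 1" using that cq by (simp add: mult_le_one less_imp_le mult_less_le_imp_less order.strict_trans1[OF mult_left_le])
    finally show "norm (a * c / q) < 1" .
    then show "norm (- a * c / q) < 1" by (simp add: norm_mult norm_divide)
    show "norm (- a) < 1" using that by simp
  qed
  have Fconv: "F a = qpoch_inf q q * qpoch_inf (- a) q * qpoch_inf (- c / q) q * qpoch_inf (a * c / q) q * LHS a"
    if "norm a < 1" for a
    unfolding F_def Lh_def LHS_def conv1[OF q0 q c0 cq that] by (simp add: mult_ac)
  have Gconv: "G a = qpoch_inf (- q) q * qpoch_inf a q * qpoch_inf c q * qpoch_inf (- a * c / q) q * (2 + SR a)"
    if "a \<in> S" for a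
  proof -
    have "Hs a = qpoch_inf a q * SR a" unfolding Hs_def SR_def
      by (rule conv2[OF q0 q c0 cq c1]) (use that in \<open>simp add: S_def\<close>)
    then show ?thesis unfolding G_def by (simp add: algebra_simps)
  qed
  obtain KV where KV: "\<And>m. norm (qpoch (q / c) q m / qpoch c q m * alpha q m) \<le> KV * (real m + 1)"
    using V_bound[OF q0 q c1] by blast
  have holF: "F holomorphic_on S"
  proof -
    obtain Kf where Kf: "\<And>n. norm (qpoch (q / c) q n) \<le> Kf"
      using qpoch_norm_le[OF q] by blast
    have "(\<lambda>C. \<Sum>n. qpoch (q / c) q n * (- c / q) ^ n * qpoch_inf (C * q ^ n) q) holomorphic_on (uminus ` S)"
      by (rule L_holo[OF q _ Kf]) (use cq in \<open>simp add: norm_divide\<close>)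
    then have "((\<lambda>C. \<Sum>n. qpoch (q / c) q n * (- c / q) ^ n * qpoch_inf (C * q ^ n) q) \<circ> uminus) holomorphic_on S"
      by (intro holomorphic_on_compose holomorphic_intros)
    then have "Lh holomorphic_on S" by (simp add: Lh_def o_def)
    then show ?thesis unfolding F_def using q0 by (intro holomorphic_intros qpoch_inf_holo_comp q)
  qed
  have holG: "G holomorphic_on S"
  proof -
    have "Hs holomorphic_on S" unfolding Hs_def S_def by (rule H_holo[OF q0 q cq KV])
    then show ?thesis unfolding G_def using q0 by (intro holomorphic_intros qpoch_inf_holo_comp q)
  qed
  have openS: "open S" by (simp add: S_def open_delete)
  have connS: "connected S" unfolding S_def by (rule connected_punctured_ball) simp
  have openU: "open U" unfolding U_def by (intro open_Collect_conj open_Collect_less continuous_intros)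
  have UsubS: "U \<subseteq> S" using q0 by (auto simp: U_def S_def)
  have Une: "U \<noteq> {}"
  proof -
    define t where "t = (norm q + 1) / 2"
    have t0: "t \<ge> 0" by (simp add: t_def)
    have "norm (complex_of_real t) = t" using t0 by simp
    moreover have "norm q < t" "t < 1" using q by (simp_all add: t_def)
    ultimately have "complex_of_real t \<in> U" unfolding U_def by simp
    then show ?thesis by blast
  qed
  have eqU: "F a = G a" if aU: "a \<in> U" for a
  proof -
    have a1: "norm a < 1" and qa: "norm q < norm a" using aU by (auto simp: U_def)
    have a0: "a \<noteq> 0" using qa by auto
    have aS: "a \<in> S" using aU UsubS by auto
    have MR: "LHS a = (qpoch_inf (-q) q * qpoch_inf a q * qpoch_inf c q * qpoch_inf (- a * c / q) q)
      / (qpoch_inf q q * qpoch_inf (-a) q * qpoch_inf (- c / q) q * qpoch_inf (a * c / q) q) * (2 + SR a)"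
      unfolding LHS_def SR_def
      by (rule main_region) (use assms a0 a1 qa small(2)[OF a1] in auto)
    have nz: "qpoch_inf q q \<noteq> 0" "qpoch_inf (- a) q \<noteq> 0" "qpoch_inf (- c / q) q \<noteq> 0" "qpoch_inf (a * c / q) q \<noteq> 0"
      using qpoch_inf_nonzero[OF q qq_nonzero[OF q]] nzi[OF small(1)[OF a1]] nzi small(2)[OF a1] cq
      by (auto simp: norm_divide)
    show ?thesis unfolding Fconv[OF a1] Gconv[OF aS] MR using nz by (simp add: field_simps)
  qed
  have aS: "a \<in> S" using assms by (simp add: S_def)
  have FG: "F a = G a"
    by (rule analytic_continuation_open[OF openU openS Une connS UsubS holF holG eqU aS])
  have a1: "norm a < 1" using assms by simp
  have nz: "qpoch_inf q q \<noteq> 0" "qpoch_inf (- a) q \<noteq> 0" "qpoch_inf (- c / q) q \<noteq> 0" "qpoch_inf (a * c / q) q \<noteq> 0"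
    using qpoch_inf_nonzero[OF q qq_nonzero[OF q]] nzi[OF small(1)[OF a1]] nzi small(2)[OF a1] cq
    by (auto simp: norm_divide)
  have "LHS a = (qpoch_inf (-q) q * qpoch_inf a q * qpoch_inf c q * qpoch_inf (- a * c / q) q)
      / (qpoch_inf q q * qpoch_inf (-a) q * qpoch_inf (- c / q) q * qpoch_inf (a * c / q) q) * (2 + SR a)"
    using FG unfolding Fconv[OF a1] Gconv[OF aS] using nz by (simp add: field_simps)
  then show ?thesis unfolding LHS_def SR_def .
qed

end
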